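(* Let $p\ge1$, $k\ge1$, and suppose $c\in\mathbb R^p$ and $f_i(z)=\Phi_iz$ with $\Phi_i\in\mathbb R^{p\times p}$ for $i=0,\dots,k$ (a linear VAR), with $\Phi(\lambda)\defeq\Phi_0-\sum_{i=1}^k\Phi_i\lambda^i$. Suppose for some $r\in\{0,\dots,p\}$, with $q=p-r$: (LIN.1) $\Phi_0$ is invertible; (LIN.2) $c\in\operatorname{span}\Phi(1)$ and $\operatorname{rank}\Phi(1)=r$; (LIN.3) $\Phi(\lambda)$ has $q$ roots at unity and all others outside the unit circle. Then $(c,\{f_i\}_{i=0}^k)$ belongs to the class $\mathcal M_r$, with $g_j(z)=\Gamma_jz$ where $\Gamma_j\defeq-\sum_{i=j+1}^k\Phi_i$ for $j=1,\dots,k-1$, and $$\chi(z)=\begin{bmatrix}\psi(z)\\\theta(z)\end{bmatrix}=\begin{bmatrix}\alpha_\perp^\top(\Phi_0-\sum_{i=1}^{k-1}\Gamma_i)\\\beta^\top\end{bmatrix}z,$$ for $\alpha,\beta\in\mathbb R^{p\times r}$ (of full column rank) such that $\alpha\beta^\top=-\Phi(1)$.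
   Context: Roots of $\Phi(\lambda)$ means roots of $\det\Phi(\lambda)$. Model: for $c\in\mathbb R^p$ and maps $f_0,\dots,f_k:\mathbb R^p\to\mathbb R^p$ with $f_i(0)=0$, the nonlinear VAR($k$) is $f_0(z_t)=c+\sum_{i=1}^k f_i(z_{t-i})+u_t$. (When $k=1$, blocks indexed by $1,\dots,k-1$ are empty.) Define $g_j(z)=-\sum_{i=j+1}^k f_i(z)$; $\pi(z)=-f_0(z)+\sum_{i=1}^k f_i(z)$; $\mathbf g(z)=(g_1(z)^\top,\dots,g_{k-1}(z)^\top)^\top$. $D\in\mathbb R^{p(k-1)\times p(k-1)}$ has $-I_p$ diagonal blocks, $I_p$ blocks immediately above the diagonal, zeros elsewhere; $E=(I_p,0_{p\times p(k-2)})^\top$. For $\alpha$ of rank $r$, $\alpha_\perp$ is $p\times(p-r)$ of rank $p-r$ with $\alpha_\perp^\top\alpha=0$; $\boldsymbol\alpha=\begin{bmatrix}\alpha & E^\top\\ 0 & I_{p(k-1)}\end{bmatrix}$; for $\theta:\mathbb R^p\to\mathbb R^r$, $\boldsymbol\theta(z)=(\theta(z)^\top,\mathbf g(z)^\top)^\top$, $\mathbf D_0=\begin{bmatrix}0_{r\times p}&0\\0&D\end{bmatrix}$. Joint spectral radius: $\rho_{JSR}(\mathcal A)=\limsup_{t}\sup\{\rho(M_1\cdots M_t)^{1/t}:M_s\in\mathcal A\}$. Class $\mathcal M_r$: the model belongs to $\mathcal M_r$ if for some $\alpha\in\mathbb R^{p\times r}$ of rank $r$, $\bar b<\infty$, $\bar\rho<1$: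 (i) $f_0$ is a homeomorphism of $\mathbb R^p$; (ii) there exist $\mu\in\mathbb R^r$, $\theta:\mathbb R^p\to\mathbb R^r$ with $c=\alpha\mu$, $\pi=\alpha\theta$; (iii) there is a closed $\mathcal B\subset\mathbb R^{kp\times[p(k-1)+r]}$ with $\max_{\mathcal B}\|\boldsymbol\beta\|\le\bar b$ and $\rho_{JSR}(\{I+\boldsymbol\beta^\top\boldsymbol\alpha:\boldsymbol\beta\in\mathcal B\})\le\bar\rho$, such that for all $\mathbf z=(z^\top,\boldsymbol\zeta^\top)^\top,\mathbf z'\in\mathbb R^{kp}$ some $\boldsymbol\beta\in\mathcal B$ satisfies $[\boldsymbol\theta(f_0^{-1}(z))+\mathbf D_0\mathbf z]-[\boldsymbol\theta(f_0^{-1}(z'))+\mathbf D_0\mathbf z']=\boldsymbol\beta^\top(\mathbf z-\mathbf z')$. Then $\psi(z)=\alpha_\perp^\top[f_0(z)-\sum_{i=1}^{k-1}g_i(z)]$ and $\chi=(\psi^\top,\theta^\top)^\top$. *)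

theory Defs
  imports "Jordan_Normal_Form.Spectral_Radius" "Jordan_Normal_Form.DL_Rank"
    "HOL-Library.Liminf_Limsup" "HOL-Library.Extended_Real"
begin

definition vnorm :: "real vec \<Rightarrow> real" where
  "vnorm v = sqrt (\<Sum>i<dim_vec v. (v $ i)^2)"

definition mnorm :: "real mat \<Rightarrow> real" where
  "mnorm A = sqrt (\<Sum>i<dim_row A. \<Sum>j<dim_col A. (A $$ (i,j))^2)"

definition cont_on_vec :: "nat \<Rightarrow> (real vec \<Rightarrow> real vec) \<Rightarrow> bool" where
  "cont_on_vec n f \<longleftrightarrow> (\<forall>x\<in>carrier_vec n. \<forall>e>0. \<exists>d>0. \<forall>y\<in>carrier_vec n.
      vnorm (y - x) < d \<longrightarrow> vnorm (f y - f x) < e)"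

definition homeo_vec :: "nat \<Rightarrow> (real vec \<Rightarrow> real vec) \<Rightarrow> bool" where
  "homeo_vec n f \<longleftrightarrow> bij_betw f (carrier_vec n) (carrier_vec n) \<and> cont_on_vec n f
     \<and> cont_on_vec n (the_inv_into (carrier_vec n) f)"

definition closed_mats :: "nat \<Rightarrow> nat \<Rightarrow> real mat set \<Rightarrow> bool" where
  "closed_mats m n B \<longleftrightarrow> B \<subseteq> carrier_mat m n \<and>
     (\<forall>X L. L \<in> carrier_mat m n \<longrightarrow> (\<forall>t. X t \<in> B) \<longrightarrow>
        (\<lambda>t. mnorm (X t - L)) \<longlonglongrightarrow> 0 \<longrightarrow> L \<in> B)"

text \<open>spectral radius of a real square matrix (over its complex eigenvalues);
  the 0x0 matrix gets spectral radius 0\<close>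
definition srad :: "real mat \<Rightarrow> real" where
  "srad M = (if dim_row M = 0 then 0 else spectral_radius (map_mat complex_of_real M))"

definition jsr :: "nat \<Rightarrow> real mat set \<Rightarrow> ereal" where
  "jsr n A = limsup (\<lambda>t. SUP Ms \<in> {Ms. length Ms = t \<and> set Ms \<subseteq> A}.
       ereal (root t (srad (foldr (*) Ms (1\<^sub>m n)))))"

definition gfun :: "nat \<Rightarrow> nat \<Rightarrow> (nat \<Rightarrow> real vec \<Rightarrow> real vec) \<Rightarrow> nat \<Rightarrow> real vec \<Rightarrow> real vec" where
  "gfun p k f j z = vec p (\<lambda>l. - (\<Sum>i\<in>{j+1..k}. f i z $ l))"

definition pifun :: "nat \<Rightarrow> nat \<Rightarrow> (nat \<Rightarrow> real vec \<Rightarrow> real vec) \<Rightarrow> real vec \<Rightarrow> real vec" where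
  "pifun p k f z = vec p (\<lambda>l. - f 0 z $ l + (\<Sum>i\<in>{1..k}. f i z $ l))"

text \<open>stacked vector (g_1(z), ..., g_{k-1}(z))\<close>
definition gbold :: "nat \<Rightarrow> nat \<Rightarrow> (nat \<Rightarrow> real vec \<Rightarrow> real vec) \<Rightarrow> real vec \<Rightarrow> real vec" where
  "gbold p k f z = vec (p*(k-1)) (\<lambda>l. gfun p k f (l div p + 1) z $ (l mod p))"

definition Dmat :: "nat \<Rightarrow> nat \<Rightarrow> real mat" where
  "Dmat p k = mat (p*(k-1)) (p*(k-1)) (\<lambda>(i,j). if i = j then -1 else if j = i + p then 1 else 0)"

definition Emat :: "nat \<Rightarrow> nat \<Rightarrow> real mat" where
  "Emat p k = mat (p*(k-1)) p (\<lambda>(i,j). if i = j then 1 else 0)"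

definition alpha_bold :: "nat \<Rightarrow> nat \<Rightarrow> nat \<Rightarrow> real mat \<Rightarrow> real mat" where
  "alpha_bold p k r \<alpha> = four_block_mat \<alpha> (transpose_mat (Emat p k)) (0\<^sub>m (p*(k-1)) r) (1\<^sub>m (p*(k-1)))"

definition theta_bold :: "nat \<Rightarrow> nat \<Rightarrow> (nat \<Rightarrow> real vec \<Rightarrow> real vec) \<Rightarrow> (real vec \<Rightarrow> real vec)
    \<Rightarrow> real vec \<Rightarrow> real vec" where
  "theta_bold p k f \<theta> z = \<theta> z @\<^sub>v gbold p k f z"

definition D0mat :: "nat \<Rightarrow> nat \<Rightarrow> nat \<Rightarrow> real mat" where
  "D0mat p k r = four_block_mat (0\<^sub>m r p) (0\<^sub>m r (p*(k-1))) (0\<^sub>m (p*(k-1)) p) (Dmat p k)"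

definition psi :: "nat \<Rightarrow> nat \<Rightarrow> (nat \<Rightarrow> real vec \<Rightarrow> real vec) \<Rightarrow> real mat \<Rightarrow> real vec \<Rightarrow> real vec" where
  "psi p k f \<alpha>perp z = transpose_mat \<alpha>perp *\<^sub>v
     vec p (\<lambda>l. f 0 z $ l - (\<Sum>i\<in>{1..k-1}. gfun p k f i z $ l))"

definition Mr_wit :: "nat \<Rightarrow> nat \<Rightarrow> nat \<Rightarrow> real vec \<Rightarrow> (nat \<Rightarrow> real vec \<Rightarrow> real vec)
    \<Rightarrow> real mat \<Rightarrow> (real vec \<Rightarrow> real vec) \<Rightarrow> bool" where
  "Mr_wit p k r c f \<alpha> \<theta> \<longleftrightarrow>
     \<alpha> \<in> carrier_mat p r \<and> vec_space.rank p \<alpha> = r \<and>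
     (\<exists>bbar \<rho>bar. \<rho>bar < 1 \<and>
        homeo_vec p (f 0) \<and>
        (\<exists>\<mu>\<in>carrier_vec r. c = \<alpha> *\<^sub>v \<mu>) \<and>
        (\<forall>z\<in>carrier_vec p. \<theta> z \<in> carrier_vec r \<and> pifun p k f z = \<alpha> *\<^sub>v \<theta> z) \<and>
        (\<exists>B. closed_mats (k*p) (p*(k-1)+r) B \<and> (\<forall>\<beta>\<in>B. mnorm \<beta> \<le> bbar) \<and>
           jsr (p*(k-1)+r) ((\<lambda>\<beta>. 1\<^sub>m (p*(k-1)+r) + transpose_mat \<beta> * alpha_bold p k r \<alpha>) ` B)
             \<le> ereal \<rho>bar \<and>
           (\<forall>zb\<in>carrier_vec (k*p). \<forall>zb'\<in>carrier_vec (k*p). \<exists>\<beta>\<in>B.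
              (theta_bold p k f \<theta> (the_inv_into (carrier_vec p) (f 0) (vec_first zb p))
                 + D0mat p k r *\<^sub>v zb)
              - (theta_bold p k f \<theta> (the_inv_into (carrier_vec p) (f 0) (vec_first zb' p))
                 + D0mat p k r *\<^sub>v zb')
              = transpose_mat \<beta> *\<^sub>v (zb - zb'))))"

definition in_Mr :: "nat \<Rightarrow> nat \<Rightarrow> nat \<Rightarrow> real vec \<Rightarrow> (nat \<Rightarrow> real vec \<Rightarrow> real vec) \<Rightarrow> bool" where
  "in_Mr p k r c f \<longleftrightarrow> (\<exists>\<alpha> \<theta>. Mr_wit p k r c f \<alpha> \<theta>)"

definition PhiAt :: "nat \<Rightarrow> nat \<Rightarrow> (nat \<Rightarrow> real mat) \<Rightarrow> real \<Rightarrow> real mat" where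
  "PhiAt p k \<Phi> x = mat p p (\<lambda>(a,b). \<Phi> 0 $$ (a,b) - (\<Sum>i\<in>{1..k}. \<Phi> i $$ (a,b) * x ^ i))"

definition PhiPoly :: "nat \<Rightarrow> nat \<Rightarrow> (nat \<Rightarrow> real mat) \<Rightarrow> real poly mat" where
  "PhiPoly p k \<Phi> = mat p p (\<lambda>(a,b). [:\<Phi> 0 $$ (a,b):] - (\<Sum>i\<in>{1..k}. monom (\<Phi> i $$ (a,b)) i))"

definition detPhi :: "nat \<Rightarrow> nat \<Rightarrow> (nat \<Rightarrow> real mat) \<Rightarrow> complex poly" where
  "detPhi p k \<Phi> = map_poly complex_of_real (det (PhiPoly p k \<Phi>))"

definition Gamma :: "nat \<Rightarrow> nat \<Rightarrow> (nat \<Rightarrow> real mat) \<Rightarrow> nat \<Rightarrow> real mat" where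
  "Gamma p k \<Phi> j = mat p p (\<lambda>(a,b). - (\<Sum>i\<in>{j+1..k}. \<Phi> i $$ (a,b)))"

end

theory Submission
  imports Defs
begin


lemma phi_split:
  fixes z :: "'a::comm_ring_1" and \<phi> :: "nat \<Rightarrow> 'a"
  shows "c - (\<Sum>i\<in>{1..k}. \<phi> i * z^i) =
    (1 - z) * (c + (\<Sum>j\<in>{1..k-1}. (\<Sum>i\<in>{j+1..k}. \<phi> i) * z^j)) + z * (c - (\<Sum>i\<in>{1..k}. \<phi> i))"
proof (induction k)
  case 0
  then show ?case by (simp add: algebra_simps)
next
  case (Suc k)
  have e1: "(\<Sum>j\<in>{1..Suc k-1}. (\<Sum>i\<in>{j+1..Suc k}. \<phi> i) * z^j)
     = (\<Sum>j\<in>{1..k-1}. (\<Sum>i\<in>{j+1..k}. \<phi> i) * z^j) + \<phi> (Suc k) * (\<Sum>j\<in>{1..k}. z^j)"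
  proof (cases k)
    case 0 then show ?thesis by simp
  next
    case (Suc m)
    have "(\<Sum>j\<in>{1..Suc k-1}. (\<Sum>i\<in>{j+1..Suc k}. \<phi> i) * z^j)
        = (\<Sum>j\<in>{1..k}. ((\<Sum>i\<in>{j+1..k}. \<phi> i) + \<phi> (Suc k)) * z^j)"
      by (intro sum.cong refl) (auto simp: sum.cl_ivl_Suc)
    also have "\<dots> = (\<Sum>j\<in>{1..k}. (\<Sum>i\<in>{j+1..k}. \<phi> i) * z^j) + \<phi> (Suc k) * (\<Sum>j\<in>{1..k}. z^j)"
      by (simp add: algebra_simps sum.distrib sum_distrib_left)
    also have "(\<Sum>j\<in>{1..k}. (\<Sum>i\<in>{j+1..k}. \<phi> i) * z^j) = (\<Sum>j\<in>{1..k-1}. (\<Sum>i\<in>{j+1..k}. \<phi> i) * z^j)"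
      using Suc by (simp add: sum.cl_ivl_Suc)
    finally show ?thesis .
  qed
  have geo: "(1 - z) * (\<Sum>j\<in>{1..k}. z^j) = z - z^(Suc k)"
  proof (induction k)
    case (Suc k)
    have "(1 - z) * (\<Sum>j\<in>{1..Suc k}. z^j) = (1 - z) * (\<Sum>j\<in>{1..k}. z^j) + (1 - z) * z^Suc k"
      by (simp add: sum.cl_ivl_Suc algebra_simps)
    also have "\<dots> = z - z^Suc k + (1 - z) * z^Suc k" using Suc.IH by simp
    also have "\<dots> = z - z^Suc (Suc k)" by (simp add: algebra_simps)
    finally show ?case .
  qed simp
  define S where "S = (\<Sum>j\<in>{1..k}. z^j)"
  define T where "T = (\<Sum>j\<in>{1..k-1}. (\<Sum>i\<in>{j+1..k}. \<phi> i) * z^j)"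
  define P where "P = (\<Sum>i\<in>{1..k}. \<phi> i)"
  define Q where "Q = (\<Sum>i\<in>{1..k}. \<phi> i * z^i)"
  have g2: "(1 - z) * (\<phi> (Suc k) * S) = \<phi> (Suc k) * z - \<phi> (Suc k) * z^Suc k"
    unfolding mult.left_commute[of "1 - z"] geo[folded S_def] by (simp add: algebra_simps)
  have IH: "c - Q = (1 - z) * (c + T) + z * (c - P)" using Suc.IH unfolding Q_def T_def P_def .
  have "c - (\<Sum>i\<in>{1..Suc k}. \<phi> i * z^i) = (c - Q) - \<phi> (Suc k) * z^Suc k"
    unfolding Q_def by (simp add: sum.cl_ivl_Suc)
  also have "\<dots> = (1 - z) * (c + T) + z * (c - P) - \<phi> (Suc k) * z^Suc k" using IH by simp
  also have "\<dots> = (1 - z) * (c + T) + z * (c - P) + ((1 - z) * (\<phi> (Suc k) * S) - \<phi> (Suc k) * z)"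
    using g2 by simp
  also have "\<dots> = (1 - z) * (c + (T + \<phi> (Suc k) * S)) + z * (c - (P + \<phi> (Suc k)))"
    by (simp add: algebra_simps)
  also have "\<dots> = (1 - z) * (c + (\<Sum>j\<in>{1..Suc k-1}. (\<Sum>i\<in>{j+1..Suc k}. \<phi> i) * z^j)) + z * (c - (\<Sum>i\<in>{1..Suc k}. \<phi> i))"
    unfolding e1 T_def S_def P_def by (simp add: sum.cl_ivl_Suc)
  finally show ?case .
qed


lemma ut_mult:
  assumes A: "A \<in> carrier_mat n n" and B: "B \<in> carrier_mat n n"
    and uA: "upper_triangular A" and uB: "upper_triangular B"
  shows "upper_triangular (A * B) \<and> (\<forall>i<n. (A * B) $$ (i,i) = A $$ (i,i) * B $$ (i,i))"
proof (intro conjI allI impI upper_triangularI)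
  fix i j assume ji: "j < i" and i: "i < dim_row (A * B)"
  hence i: "i < n" using A by simp
  have "(A * B) $$ (i,j) = (\<Sum>l<n. A $$ (i,l) * B $$ (l,j))"
    using A B i ji by (simp add: scalar_prod_def lessThan_atLeast0)
  also have "\<dots> = 0"
  proof (intro sum.neutral ballI)
    fix l assume "l \<in> {..<n}"
    show "A $$ (i,l) * B $$ (l,j) = 0"
    proof (cases "l < i")
      case True then show ?thesis using upper_triangularD[OF uA True] A i by simp
    next
      case False then have "j < l" using ji by simp
      then show ?thesis using upper_triangularD[OF uB \<open>j < l\<close>] B \<open>l \<in> {..<n}\<close> by simp
    qed
  qed
  finally show "(A * B) $$ (i,j) = 0" .
next
  fix i assume i: "i < n"
  have "(A * B) $$ (i,i) = (\<Sum>l<n. A $$ (i,l) * B $$ (l,i))"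
    using A B i by (simp add: scalar_prod_def lessThan_atLeast0)
  also have "\<dots> = A $$ (i,i) * B $$ (i,i)"
  proof -
    have "(\<Sum>l<n. A $$ (i,l) * B $$ (l,i)) = A $$ (i,i) * B $$ (i,i) + (\<Sum>l\<in>{..<n}-{i}. A $$ (i,l) * B $$ (l,i))"
      using i by (subst sum.remove[of _ i]) auto
    also have "(\<Sum>l\<in>{..<n}-{i}. A $$ (i,l) * B $$ (l,i)) = 0"
    proof (intro sum.neutral ballI)
      fix l assume l: "l \<in> {..<n}-{i}"
      show "A $$ (i,l) * B $$ (l,i) = 0"
      proof (cases "l < i")
        case True then show ?thesis using upper_triangularD[OF uA True] A i by simp
      next
        case False then have "i < l" using l by simp
        then show ?thesis using upper_triangularD[OF uB \<open>i < l\<close>] B l by simp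
      qed
    qed
    finally show ?thesis by simp
  qed
  finally show "(A * B) $$ (i,i) = A $$ (i,i) * B $$ (i,i)" .
qed

lemma ut_pow:
  fixes A :: "'a::comm_ring_1 mat"
  assumes A: "A \<in> carrier_mat n n" and uA: "upper_triangular A"
  shows "upper_triangular (A ^\<^sub>m t) \<and> (\<forall>i<n. (A ^\<^sub>m t) $$ (i,i) = A $$ (i,i) ^ t)"
proof (induction t)
  case 0 then show ?case using A by auto
next
  case (Suc t)
  have "A ^\<^sub>m Suc t = A ^\<^sub>m t * A" by simp
  then show ?case using ut_mult[OF pow_carrier_mat[OF A] A _ uA, of t] Suc by (auto simp: mult.commute)
qed

lemma eigenvalue_pow_ex:
  fixes C :: "complex mat"
  assumes C: "C \<in> carrier_mat n n" and ev: "eigenvalue (C ^\<^sub>m t) \<nu>"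
  shows "\<exists>\<mu>. eigenvalue C \<mu> \<and> \<nu> = \<mu> ^ t"
proof -
  from char_poly_factorized[OF C] obtain es where es: "char_poly C = (\<Prod>a\<leftarrow>es. [:- a, 1:])" by auto
  from schur_decomposition_exists[OF C es] obtain B where B: "B \<in> carrier_mat n n"
    "upper_triangular B" "similar_mat C B" by auto
  from B(3) obtain P Q where wit: "similar_mat_wit C B P Q" unfolding similar_mat_def by auto
  have simt: "similar_mat (C ^\<^sub>m t) (B ^\<^sub>m t)"
    using similar_mat_wit_pow[OF wit] unfolding similar_mat_def by auto
  have Bt: "B ^\<^sub>m t \<in> carrier_mat n n" using B by simp
  note ut = ut_pow[OF B(1,2), of t]
  have "poly (char_poly (C ^\<^sub>m t)) \<nu> = 0"
    using ev eigenvalue_root_char_poly[OF pow_carrier_mat[OF C]] by simp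
  hence "poly (char_poly (B ^\<^sub>m t)) \<nu> = 0" using char_poly_similar[OF simt] by simp
  hence "poly (\<Prod>a\<leftarrow>diag_mat (B ^\<^sub>m t). [:- a, 1:]) \<nu> = 0"
    using char_poly_upper_triangular[OF Bt] ut by simp
  then obtain i where i: "i < n" "\<nu> = (B ^\<^sub>m t) $$ (i,i)"
    unfolding poly_prod_list_zero_iff using Bt by (auto simp: diag_mat_def)
  hence nu: "\<nu> = B $$ (i,i) ^ t" using ut by simp
  have "poly (char_poly B) (B $$ (i,i)) = 0"
    unfolding char_poly_upper_triangular[OF B(1,2)] poly_prod_list_zero_iff
    using i B(1) by (auto simp: diag_mat_def)
  hence "poly (char_poly C) (B $$ (i,i)) = 0" using char_poly_similar[OF B(3)] by simp
  hence "eigenvalue C (B $$ (i,i))" using eigenvalue_root_char_poly[OF C] by simp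
  with nu show ?thesis by blast
qed

lemma spectral_radius_pow_le:
  fixes C :: "complex mat"
  assumes C: "C \<in> carrier_mat n n" and n: "n > 0"
  shows "spectral_radius (C ^\<^sub>m t) \<le> spectral_radius C ^ t"
proof -
  have Ct: "C ^\<^sub>m t \<in> carrier_mat n n" using C by simp
  from spectral_radius_mem_max(1)[OF Ct n] obtain \<nu> where
    nu: "\<nu> \<in> spectrum (C ^\<^sub>m t)" "spectral_radius (C ^\<^sub>m t) = norm \<nu>" by auto
  from eigenvalue_pow_ex[OF C, of t \<nu>] nu(1) obtain \<mu> where mu: "eigenvalue C \<mu>" "\<nu> = \<mu> ^ t"
    unfolding spectrum_def by auto
  have "norm \<mu> \<le> spectral_radius C"
    using spectral_radius_mem_max(2)[OF C n] mu(1) unfolding spectrum_def by auto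
  hence "norm \<mu> ^ t \<le> spectral_radius C ^ t" by (intro power_mono) auto
  thus ?thesis using nu mu by (simp add: norm_power)
qed


lemma pow_mat_Suc_left:
  fixes M :: "'a::semiring_1 mat"
  assumes M: "M \<in> carrier_mat n n"
  shows "M * M ^\<^sub>m t = M ^\<^sub>m Suc t"
proof (induction t)
  case 0 then show ?case using M by simp
next
  case (Suc t)
  have "M * M ^\<^sub>m Suc t = (M * M ^\<^sub>m t) * M"
    using M by (simp add: assoc_mult_mat[of M n n "M ^\<^sub>m t" n M n])
  also have "\<dots> = M ^\<^sub>m Suc (Suc t)" using Suc by simp
  finally show ?case .
qed

lemma foldr_replicate_pow:
  fixes M :: "'a::semiring_1 mat"
  assumes M: "M \<in> carrier_mat n n"
  shows "foldr (*) (replicate t M) (1\<^sub>m n) = M ^\<^sub>m t"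
  using M by (induction t) (auto simp: pow_mat_Suc_left[OF M])

lemma srad_nonneg:
  assumes M: "M \<in> carrier_mat n n"
  shows "0 \<le> srad M"
proof (cases "n = 0")
  case True then show ?thesis using M unfolding srad_def by simp
next
  case False
  have C: "map_mat complex_of_real M \<in> carrier_mat n n" using M by auto
  from spectral_radius_mem_max(1)[OF C] False show ?thesis using M unfolding srad_def by auto
qed

lemma srad_pow_le:
  assumes M: "M \<in> carrier_mat n n"
  shows "srad (M ^\<^sub>m t) \<le> srad M ^ t"
proof (cases "n = 0")
  case True then show ?thesis using M unfolding srad_def by (cases t) auto
next
  case False
  have C: "map_mat complex_of_real M \<in> carrier_mat n n" using M by auto
  have "map_mat complex_of_real (M ^\<^sub>m t) = map_mat complex_of_real M ^\<^sub>m t"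
    by (rule of_real_hom.mat_hom_pow[OF M])
  then show ?thesis using spectral_radius_pow_le[OF C, of t] False M unfolding srad_def by simp
qed

lemma jsr_single:
  assumes M: "M \<in> carrier_mat n n" and le: "srad M \<le> \<rho>"
  shows "jsr n {M} \<le> ereal \<rho>"
proof -
  have rho: "0 \<le> \<rho>" using srad_nonneg[OF M] le by simp
  have set_eq: "{Ms. length Ms = t \<and> set Ms \<subseteq> {M}} = {replicate t M}" for t
  proof -
    have "x = replicate (length x) M" if "set x \<subseteq> {M}" for x using that by (induction x) auto
    then show ?thesis by auto
  qed
  have bound: "root t (srad (foldr (*) Ms (1\<^sub>m n))) \<le> \<rho>" if "Ms \<in> {Ms. length Ms = t \<and> set Ms \<subseteq> {M}}" for Ms t
  proof -
    have Ms: "Ms = replicate t M" using that set_eq by blast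
    show ?thesis
    proof (cases "t = 0")
      case True then show ?thesis using rho by simp
    next
      case False
      have "srad (M ^\<^sub>m t) \<le> \<rho> ^ t"
        using srad_pow_le[OF M, of t] power_mono[OF le srad_nonneg[OF M], of t] by linarith
      hence "root t (srad (M ^\<^sub>m t)) \<le> root t (\<rho> ^ t)" using False by (simp add: real_root_le_iff)
      also have "\<dots> = \<rho>" using False rho by (simp add: real_root_power_cancel)
      finally show ?thesis unfolding Ms foldr_replicate_pow[OF M] .
    qed
  qed
  show ?thesis unfolding jsr_def
    by (rule Limsup_bounded, rule always_eventually, intro allI SUP_least, use bound in auto)
qed


lemma sum_sq_le_sq_sum_abs:
  fixes x :: "nat \<Rightarrow> real"
  shows "(\<Sum>i\<in>I. (x i)^2) \<le> (\<Sum>i\<in>I. \<bar>x i\<bar>)^2"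
proof (induction I rule: infinite_finite_induct)
  case (insert a F)
  have S: "0 \<le> (\<Sum>i\<in>F. \<bar>x i\<bar>)" by (simp add: sum_nonneg)
  have "(\<Sum>i\<in>insert a F. (x i)^2) = (x a)^2 + (\<Sum>i\<in>F. (x i)^2)" using insert by simp
  also have "\<dots> \<le> \<bar>x a\<bar>^2 + (\<Sum>i\<in>F. \<bar>x i\<bar>)^2" using insert by simp
  also have "\<dots> \<le> (\<bar>x a\<bar> + (\<Sum>i\<in>F. \<bar>x i\<bar>))^2" using S by (simp add: power2_eq_square algebra_simps)
  also have "\<dots> = (\<Sum>i\<in>insert a F. \<bar>x i\<bar>)^2" using insert by simp
  finally show ?case .
qed auto

lemma vnorm_nonneg: "0 \<le> vnorm v"
  unfolding vnorm_def by (simp add: sum_nonneg)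

lemma abs_le_vnorm: assumes "j < dim_vec v" shows "\<bar>v $ j\<bar> \<le> vnorm v"
proof -
  have "(v $ j)^2 \<le> (\<Sum>i<dim_vec v. (v $ i)^2)"
    using assms by (intro member_le_sum) auto
  then show ?thesis unfolding vnorm_def using real_le_rsqrt by (metis real_sqrt_abs real_sqrt_le_mono)
qed

lemma vnorm_le_sum_abs: "vnorm v \<le> (\<Sum>i<dim_vec v. \<bar>v $ i\<bar>)"
  unfolding vnorm_def
  by (rule real_le_lsqrt) (auto simp: sum_nonneg sum_sq_le_sq_sum_abs)

lemma vnorm_mult_le:
  assumes A: "A \<in> carrier_mat n m" and v: "v \<in> carrier_vec m"
  shows "vnorm (A *\<^sub>v v) \<le> (\<Sum>i<n. \<Sum>j<m. \<bar>A $$ (i,j)\<bar>) * vnorm v"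
proof -
  have comp: "\<bar>(A *\<^sub>v v) $ i\<bar> \<le> (\<Sum>j<m. \<bar>A $$ (i,j)\<bar>) * vnorm v" if i: "i < n" for i
  proof -
    have "(A *\<^sub>v v) $ i = (\<Sum>j<m. A $$ (i,j) * v $ j)"
      using A v i by (simp add: scalar_prod_def lessThan_atLeast0)
    hence "\<bar>(A *\<^sub>v v) $ i\<bar> \<le> (\<Sum>j<m. \<bar>A $$ (i,j)\<bar> * \<bar>v $ j\<bar>)"
      by (simp add: sum_abs[THEN order_trans] abs_mult)
    also have "\<dots> \<le> (\<Sum>j<m. \<bar>A $$ (i,j)\<bar> * vnorm v)"
      using v abs_le_vnorm[of _ v] by (intro sum_mono mult_left_mono) auto
    finally show ?thesis by (simp add: sum_distrib_right)
  qed
  have "vnorm (A *\<^sub>v v) \<le> (\<Sum>i<n. \<bar>(A *\<^sub>v v) $ i\<bar>)" using vnorm_le_sum_abs[of "A *\<^sub>v v"] A by simp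
  also have "\<dots> \<le> (\<Sum>i<n. (\<Sum>j<m. \<bar>A $$ (i,j)\<bar>) * vnorm v)" by (intro sum_mono comp) auto
  finally show ?thesis by (simp add: sum_distrib_right)
qed

lemma cont_on_vec_mat:
  fixes A :: "real mat"
  assumes A: "A \<in> carrier_mat n n"
  shows "cont_on_vec n (\<lambda>z. A *\<^sub>v z)"
  unfolding cont_on_vec_def
proof (intro ballI allI impI)
  fix x :: "real vec" and e assume x: "x \<in> carrier_vec n" and e: "(e::real) > 0"
  define K where "K = (\<Sum>i<n. \<Sum>j<n. \<bar>A $$ (i,j)\<bar>)"
  have K: "0 \<le> K" unfolding K_def by (simp add: sum_nonneg)
  show "\<exists>d>0. \<forall>y\<in>carrier_vec n. vnorm (y - x) < d \<longrightarrow> vnorm (A *\<^sub>v y - A *\<^sub>v x) < e"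
  proof (intro exI[of _ "e / (K + 1)"] conjI ballI impI)
    show "0 < e / (K + 1)" using e K by simp
    fix y :: "real vec" assume y: "y \<in> carrier_vec n" and d: "vnorm (y - x) < e / (K + 1)"
    have "A *\<^sub>v y - A *\<^sub>v x = A *\<^sub>v (y - x)" using A x y by (simp add: mult_minus_distrib_mat_vec)
    hence "vnorm (A *\<^sub>v y - A *\<^sub>v x) \<le> K * vnorm (y - x)"
      using vnorm_mult_le[OF A, of "y - x"] x y unfolding K_def by simp
    also have "\<dots> \<le> K * (e / (K + 1))" using d K by (intro mult_left_mono) auto
    also have "\<dots> < e" using K e by (simp add: field_simps)
    finally show "vnorm (A *\<^sub>v y - A *\<^sub>v x) < e" .
  qed
qed

lemma homeo_mat:
  fixes A Ai :: "real mat"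
  assumes A: "A \<in> carrier_mat n n" and Ai: "Ai \<in> carrier_mat n n"
    and inv1: "Ai * A = 1\<^sub>m n" and inv2: "A * Ai = 1\<^sub>m n"
  shows "homeo_vec n (\<lambda>z. A *\<^sub>v z)"
    and "\<And>u. u \<in> carrier_vec n \<Longrightarrow> the_inv_into (carrier_vec n) (\<lambda>z. A *\<^sub>v z) u = Ai *\<^sub>v u"
proof -
  have left: "Ai *\<^sub>v (A *\<^sub>v z) = z" if "z \<in> carrier_vec n" for z
    using that A Ai inv1 by (simp add: assoc_mult_mat_vec[symmetric])
  have right: "A *\<^sub>v (Ai *\<^sub>v z) = z" if "z \<in> carrier_vec n" for z
    using that A Ai inv2 by (simp add: assoc_mult_mat_vec[symmetric])
  have inj: "inj_on (\<lambda>z. A *\<^sub>v z) (carrier_vec n)"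
    by (rule inj_on_inverseI[where g = "\<lambda>z. Ai *\<^sub>v z"]) (use left in auto)
  have bij: "bij_betw (\<lambda>z. A *\<^sub>v z) (carrier_vec n) (carrier_vec n)"
    unfolding bij_betw_def
  proof
    show "inj_on (\<lambda>z. A *\<^sub>v z) (carrier_vec n)" by fact
    show "(\<lambda>z. A *\<^sub>v z) ` carrier_vec n = carrier_vec n"
    proof
      show "(\<lambda>z. A *\<^sub>v z) ` carrier_vec n \<subseteq> carrier_vec n" using A by auto
      show "carrier_vec n \<subseteq> (\<lambda>z. A *\<^sub>v z) ` carrier_vec n"
      proof
        fix u :: "real vec" assume u: "u \<in> carrier_vec n"
        show "u \<in> (\<lambda>z. A *\<^sub>v z) ` carrier_vec n"
          using right[OF u] Ai u by (intro image_eqI[of _ _ "Ai *\<^sub>v u"]) auto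
      qed
    qed
  qed
  show inv: "the_inv_into (carrier_vec n) (\<lambda>z. A *\<^sub>v z) u = Ai *\<^sub>v u" if u: "u \<in> carrier_vec n" for u
    by (rule the_inv_into_f_eq[OF inj]) (use right[OF u] Ai u in auto)
  have "cont_on_vec n (the_inv_into (carrier_vec n) (\<lambda>z. A *\<^sub>v z))"
    using cont_on_vec_mat[OF Ai] unfolding cont_on_vec_def by (simp add: inv)
  then show "homeo_vec n (\<lambda>z. A *\<^sub>v z)"
    unfolding homeo_vec_def using bij cont_on_vec_mat[OF A] by auto
qed


lemma mat_mult_unit_vec:
  fixes A :: "'a::semiring_1 mat"
  assumes A: "A \<in> carrier_mat n m" and i: "i < m"
  shows "A *\<^sub>v unit_vec m i = col A i"
proof (rule eq_vecI)
  fix k assume k: "k < dim_vec (col A i)"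
  have "row A k \<in> carrier_vec m" using A by auto
  then show "(A *\<^sub>v unit_vec m i) $ k = col A i $ k" using A i k by (simp add: scalar_prod_right_unit)
qed (use A in auto)

context vec_space
begin

lemma rank_full_iff_inj:
  assumes A: "A \<in> carrier_mat n nc"
  shows "rank A = nc \<longleftrightarrow> (\<forall>v\<in>carrier_vec nc. A *\<^sub>v v = 0\<^sub>v n \<longrightarrow> v = 0\<^sub>v nc)"
proof
  assume r: "rank A = nc"
  have d: "distinct (cols A)"
  proof (rule ccontr)
    assume nd: "\<not> distinct (cols A)"
    obtain S where max: "maximal S (\<lambda>T. T \<subseteq> set (cols A) \<and> lin_indpt T)"
      using maximal_exists[of "(\<lambda>T. T \<subseteq> set (cols A) \<and> lin_indpt T)" "card (set (cols A))" "{}"]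
      by (meson List.finite_set card_mono empty_iff empty_subsetI finite_lin_indpt2 rev_finite_subset)
    have "card S \<le> card (set (cols A))" using max by (simp add: card_mono maximal_def)
    also have "\<dots> < length (cols A)" using nd card_distinct card_length le_neq_implies_less by blast
    also have "\<dots> = nc" using A by simp
    finally show False using rank_card_indpt[OF A max] r by simp
  qed
  have li: "lin_indpt (set (cols A))" using full_rank_lin_indpt[OF A r d] .
  show "\<forall>v\<in>carrier_vec nc. A *\<^sub>v v = 0\<^sub>v n \<longrightarrow> v = 0\<^sub>v nc"
    using lin_depI[OF A _ _ _ d] li by blast
next
  assume inj: "\<forall>v\<in>carrier_vec nc. A *\<^sub>v v = 0\<^sub>v n \<longrightarrow> v = 0\<^sub>v nc"
  have d: "distinct (cols A)"
  proof (rule ccontr)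
    assume "\<not> distinct (cols A)"
    then obtain i j where ij: "i < length (cols A)" "j < length (cols A)" "i \<noteq> j" "cols A ! i = cols A ! j"
      using distinct_conv_nth by blast
    hence ij': "i < nc" "j < nc" "col A i = col A j" using A by auto
    define v :: "'a vec" where "v = unit_vec nc i - unit_vec nc j"
    have v: "v \<in> carrier_vec nc" unfolding v_def by simp
    have "A *\<^sub>v v = A *\<^sub>v unit_vec nc i - A *\<^sub>v unit_vec nc j"
      unfolding v_def using A by (simp add: mult_minus_distrib_mat_vec)
    also have "\<dots> = 0\<^sub>v n" using ij' A by (simp add: mat_mult_unit_vec)
    finally have "v = 0\<^sub>v nc" using inj v by blast
    hence "v $ i = 0" using ij' by simp
    thus False using ij' ij(3) unfolding v_def by simp
  qed
  have "lin_indpt (set (cols A))"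
  proof
    assume "lin_dep (set (cols A))"
    from lin_depE[OF A this d] obtain v where "v \<in> carrier_vec nc" "v \<noteq> 0\<^sub>v nc" "A *\<^sub>v v = 0\<^sub>v n" .
    with inj show False by blast
  qed
  from lin_indpt_full_rank[OF A d this] show "rank A = nc" .
qed

lemma rank_factorization:
  assumes A: "A \<in> carrier_mat n n" and r: "rank A = r"
  shows "\<exists>\<alpha> \<beta>. \<alpha> \<in> carrier_mat n r \<and> \<beta> \<in> carrier_mat n r \<and> rank \<alpha> = r \<and> rank \<beta> = r
           \<and> \<alpha> * transpose_mat \<beta> = A"
proof -
  obtain S where max: "maximal S (\<lambda>T. T \<subseteq> set (cols A) \<and> lin_indpt T)"
    using maximal_exists[of "(\<lambda>T. T \<subseteq> set (cols A) \<and> lin_indpt T)" "card (set (cols A))" "{}"]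
    by (meson List.finite_set card_mono empty_iff empty_subsetI finite_lin_indpt2 rev_finite_subset)
  have cardS: "card S = r" using rank_card_indpt[OF A max] r by simp
  have Scols: "S \<subseteq> set (cols A)" and Sli: "lin_indpt S" using max unfolding maximal_def by auto
  have colsC: "set (cols A) \<subseteq> carrier_vec n" using A by (auto simp: cols_def)
  have SC: "S \<subseteq> carrier_vec n" using Scols colsC by auto
  have finS: "finite S" using Scols finite_subset by blast
  obtain sl where sl: "distinct sl" "set sl = S" using finite_distinct_list[OF finS] by auto
  have len: "length sl = r" using sl cardS distinct_card by fastforce
  define \<alpha> where "\<alpha> = mat_of_cols n sl"
  have \<alpha>C: "\<alpha> \<in> carrier_mat n r" unfolding \<alpha>_def mat_of_cols_def using len by simp
  have cols\<alpha>: "cols \<alpha> = sl" unfolding \<alpha>_def using SC sl by (intro cols_mat_of_cols) auto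
  have rank\<alpha>: "rank \<alpha> = r"
    using lin_indpt_full_rank[OF \<alpha>C] cols\<alpha> sl Sli by simp
  have inj\<alpha>: "\<forall>v\<in>carrier_vec r. \<alpha> *\<^sub>v v = 0\<^sub>v n \<longrightarrow> v = 0\<^sub>v r"
    using rank_full_iff_inj[OF \<alpha>C] rank\<alpha> by simp
  have inspan: "col A j \<in> span S" if j: "j < n" for j
  proof (rule ccontr)
    assume ns: "col A j \<notin> span S"
    have cj: "col A j \<in> set (cols A)" using j A by (simp add: cols_def)
    hence cjC: "col A j \<in> carrier_vec n" using colsC by auto
    have "col A j \<notin> S" using ns in_own_span[OF SC] by auto
    hence "lin_indpt (S \<union> {col A j})" using lin_dep_iff_in_span[OF SC Sli cjC] ns by simp
    hence "S \<union> {col A j} = S" using max cj Scols unfolding maximal_def by blast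
    with \<open>col A j \<notin> S\<close> show False by auto
  qed
  have coef: "\<exists>x. x \<in> carrier_vec r \<and> col A j = \<alpha> *\<^sub>v x" if j: "j < n" for j
  proof -
    have "col A j \<in> span_list sl" using inspan[OF j] span_list_as_span[of sl] SC sl by simp
    then obtain c where "col A j = lincomb_list c sl" unfolding span_list_def by auto
    also have "\<dots> = \<alpha> *\<^sub>v vec r c"
    proof -
      have dims: "\<forall>w\<in>set sl. dim_vec w = n" using SC sl by auto
      show ?thesis unfolding \<alpha>_def using lincomb_list_as_mat_mult[OF dims, of c] len by simp
    qed
    finally have "col A j = \<alpha> *\<^sub>v vec r c" .
    then show ?thesis by (intro exI[of _ "vec r c"]) simp
  qed
  define cf where "cf j = (SOME x. x \<in> carrier_vec r \<and> col A j = \<alpha> *\<^sub>v x)" for j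
  have cf: "cf j \<in> carrier_vec r \<and> col A j = \<alpha> *\<^sub>v cf j" if "j < n" for j
    unfolding cf_def using someI_ex[OF coef[OF that]] .
  define \<beta>T where "\<beta>T = mat r n (\<lambda>(i,j). cf j $ i)"
  define \<beta> where "\<beta> = transpose_mat \<beta>T"
  have \<beta>TC: "\<beta>T \<in> carrier_mat r n" unfolding \<beta>T_def by simp
  have \<beta>C: "\<beta> \<in> carrier_mat n r" unfolding \<beta>_def \<beta>T_def by simp
  have colT: "col \<beta>T j = cf j" if "j < n" for j
    using cf[OF that] that unfolding \<beta>T_def by (intro eq_vecI) auto
  have prod: "\<alpha> * transpose_mat \<beta> = A"
  proof (rule eq_matI)
    fix i j assume i: "i < dim_row A" and j: "j < dim_col A"
    have "(\<alpha> * transpose_mat \<beta>) $$ (i,j) = row \<alpha> i \<bullet> col \<beta>T j"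
      unfolding \<beta>_def using \<alpha>C \<beta>TC i j A by simp
    also have "\<dots> = (\<alpha> *\<^sub>v cf j) $ i" using colT[of j] i j A \<alpha>C by simp
    also have "\<dots> = col A j $ i" using cf[of j] j A by simp
    also have "\<dots> = A $$ (i,j)" using i j A by simp
    finally show "(\<alpha> * transpose_mat \<beta>) $$ (i,j) = A $$ (i,j)" .
  qed (use \<alpha>C \<beta>C A in auto)
  have inj\<beta>: "\<forall>v\<in>carrier_vec r. \<beta> *\<^sub>v v = 0\<^sub>v n \<longrightarrow> v = 0\<^sub>v r"
  proof (intro ballI impI)
    fix v assume v: "v \<in> carrier_vec r" and bv: "\<beta> *\<^sub>v v = 0\<^sub>v n"
    have dot0: "cf j \<bullet> v = 0" if j: "j < n" for j
    proof -
      have "(\<beta> *\<^sub>v v) $ j = row \<beta> j \<bullet> v" using j \<beta>C by simp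
      also have "row \<beta> j = col \<beta>T j" unfolding \<beta>_def using j \<beta>TC by simp
      finally show ?thesis using bv colT[OF j] j by simp
    qed
    show "v = 0\<^sub>v r"
    proof (rule eq_vecI)
      fix i assume "i < dim_vec (0\<^sub>v r)"
      hence i: "i < r" by simp
      have "sl ! i \<in> set (cols A)" using Scols sl len i nth_mem by blast
      then obtain j where j: "j < n" "sl ! i = col A j" using A by (auto simp: cols_def)
      have "\<alpha> *\<^sub>v unit_vec r i = sl ! i"
        using mat_mult_unit_vec[OF \<alpha>C i] cols_nth[of i \<alpha>] cols\<alpha> \<alpha>C i by simp
      hence "\<alpha> *\<^sub>v (cf j - unit_vec r i) = 0\<^sub>v n"
        using cf[OF j(1)] j \<alpha>C by (simp add: mult_minus_distrib_mat_vec)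
      hence "cf j - unit_vec r i = 0\<^sub>v r" using inj\<alpha> cf[OF j(1)] by auto
      hence "cf j = unit_vec r i"
      proof -
        assume h: "cf j - unit_vec r i = 0\<^sub>v r"
        show ?thesis
        proof (rule eq_vecI)
          fix t assume t: "t < dim_vec (unit_vec r i)"
          have "(cf j - unit_vec r i) $ t = 0" using h t by simp
          thus "cf j $ t = unit_vec r i $ t" using t cf[OF j(1)] by simp
        qed (use cf[OF j(1)] in simp)
      qed
      hence "unit_vec r i \<bullet> v = 0" using dot0[OF j(1)] by simp
      thus "v $ i = 0\<^sub>v r $ i" using i v by (simp add: scalar_prod_left_unit)
    qed (use v in auto)
  qed
  have rank\<beta>: "rank \<beta> = r" using rank_full_iff_inj[OF \<beta>C] inj\<beta> by simp
  show ?thesis using \<alpha>C \<beta>C rank\<alpha> rank\<beta> prod by blast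
qed

end


lemma mv_index:
  assumes "M \<in> carrier_mat n m" "x \<in> carrier_vec m" "s < n"
  shows "(M *\<^sub>v x) $ s = (\<Sum>b<m. M $$ (s,b) * x $ b)"
  using assms by (simp add: scalar_prod_def lessThan_atLeast0)

lemma mat_mv:
  assumes "x \<in> carrier_vec m" "s < n"
  shows "(mat n m f *\<^sub>v x) $ s = (\<Sum>b<m. f (s,b) * x $ b)"
  using assms by (simp add: scalar_prod_def lessThan_atLeast0)

lemma mat_mv_T:
  assumes "x \<in> carrier_vec n" "s < m"
  shows "(transpose_mat (mat n m f) *\<^sub>v x) $ s = (\<Sum>b<n. f (b,s) * x $ b)"
  using assms by (simp add: scalar_prod_def lessThan_atLeast0)

definition GamG :: "nat \<Rightarrow> nat \<Rightarrow> (nat \<Rightarrow> 'a::comm_ring_1 mat) \<Rightarrow> nat \<Rightarrow> 'a mat" where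
  "GamG p k Ph j = mat p p (\<lambda>(a,b). - (\<Sum>i\<in>{j+1..k}. Ph i $$ (a,b)))"
definition PhiG :: "nat \<Rightarrow> nat \<Rightarrow> (nat \<Rightarrow> 'a::comm_ring_1 mat) \<Rightarrow> 'a \<Rightarrow> 'a mat" where
  "PhiG p k Ph z = mat p p (\<lambda>(a,b). Ph 0 $$ (a,b) - (\<Sum>i\<in>{1..k}. Ph i $$ (a,b) * z^i))"
definition PsiG :: "nat \<Rightarrow> nat \<Rightarrow> (nat \<Rightarrow> 'a::comm_ring_1 mat) \<Rightarrow> 'a \<Rightarrow> 'a mat" where
  "PsiG p k Ph z = mat p p (\<lambda>(a,b). Ph 0 $$ (a,b) - (\<Sum>j\<in>{1..k-1}. GamG p k Ph j $$ (a,b) * z^j))"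
definition GSG :: "nat \<Rightarrow> nat \<Rightarrow> (nat \<Rightarrow> 'a::comm_ring_1 mat) \<Rightarrow> 'a mat" where
  "GSG p k Ph = mat (p*(k-1)) p (\<lambda>(i,j). GamG p k Ph (i div p + 1) $$ (i mod p, j))"
definition DG :: "nat \<Rightarrow> nat \<Rightarrow> 'a::comm_ring_1 mat" where
  "DG p k = mat (p*(k-1)) (p*(k-1)) (\<lambda>(i,j). if i = j then -1 else if j = i + p then 1 else 0)"
definition EG :: "nat \<Rightarrow> nat \<Rightarrow> 'a::comm_ring_1 mat" where
  "EG p k = mat (p*(k-1)) p (\<lambda>(i,j). if i = j then 1 else 0)"
definition TBG :: "nat \<Rightarrow> nat \<Rightarrow> nat \<Rightarrow> (nat \<Rightarrow> 'a::comm_ring_1 mat) \<Rightarrow> 'a mat \<Rightarrow> 'a mat \<Rightarrow> 'a mat" where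
  "TBG p k r Ph Bt P0i = four_block_mat (Bt * P0i) (0\<^sub>m r (p*(k-1))) (GSG p k Ph * P0i) (DG p k)"
definition ABG :: "nat \<Rightarrow> nat \<Rightarrow> nat \<Rightarrow> 'a::comm_ring_1 mat \<Rightarrow> 'a mat" where
  "ABG p k r A = four_block_mat A (transpose_mat (EG p k)) (0\<^sub>m (p*(k-1)) r) (1\<^sub>m (p*(k-1)))"
definition MG :: "nat \<Rightarrow> nat \<Rightarrow> nat \<Rightarrow> (nat \<Rightarrow> 'a::comm_ring_1 mat) \<Rightarrow> 'a mat \<Rightarrow> 'a mat \<Rightarrow> 'a mat \<Rightarrow> 'a mat" where
  "MG p k r Ph A Bt P0i = 1\<^sub>m (r + p*(k-1)) + TBG p k r Ph Bt P0i * ABG p k r A"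

lemma PhiG_split:
  "PhiG p k Ph z = (1 - z) \<cdot>\<^sub>m PsiG p k Ph z + z \<cdot>\<^sub>m PhiG p k Ph 1"
proof (rule eq_matI)
  fix a b assume "a < dim_row ((1 - z) \<cdot>\<^sub>m PsiG p k Ph z + z \<cdot>\<^sub>m PhiG p k Ph 1)" "b < dim_col ((1 - z) \<cdot>\<^sub>m PsiG p k Ph z + z \<cdot>\<^sub>m PhiG p k Ph 1)"
  hence ab: "a < p" "b < p" by (auto simp: PsiG_def PhiG_def)
  have "(\<Sum>j\<in>{1..k-1}. GamG p k Ph j $$ (a,b) * z^j) = - (\<Sum>j\<in>{1..k-1}. (\<Sum>i\<in>{j+1..k}. Ph i $$ (a,b)) * z^j)"
    using ab by (simp add: GamG_def sum_negf)
  then show "PhiG p k Ph z $$ (a,b) = ((1 - z) \<cdot>\<^sub>m PsiG p k Ph z + z \<cdot>\<^sub>m PhiG p k Ph 1) $$ (a,b)"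
    using ab phi_split[of "Ph 0 $$ (a,b)" "\<lambda>i. Ph i $$ (a,b)" z k]
    by (simp add: PhiG_def PsiG_def)
qed (simp_all add: PhiG_def PsiG_def)

lemma tele:
  fixes f :: "nat \<Rightarrow> 'a::comm_ring_1"
  shows "(\<Sum>j\<in>{1..m}. z^(j-1) * f j - z^j * f (Suc j)) = f 1 - z^m * f (Suc m)"
  by (induction m) (auto simp: sum.cl_ivl_Suc)

lemma PsiG_mult:
  assumes x: "x \<in> carrier_vec p" and s: "s < p"
  shows "(PsiG p k Ph z *\<^sub>v x) $ s = (\<Sum>b<p. Ph 0 $$ (s,b) * x $ b) - (\<Sum>j\<in>{1..k-1}. z^j * (GamG p k Ph j *\<^sub>v x) $ s)"
proof -
  have "(PsiG p k Ph z *\<^sub>v x) $ s = (\<Sum>b<p. (Ph 0 $$ (s,b) - (\<Sum>j\<in>{1..k-1}. GamG p k Ph j $$ (s,b) * z^j)) * x $ b)"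
    using x s by (subst mv_index[of _ p p]) (auto simp: PsiG_def)
  also have "\<dots> = (\<Sum>b<p. Ph 0 $$ (s,b) * x $ b) - (\<Sum>b<p. \<Sum>j\<in>{1..k-1}. z^j * (GamG p k Ph j $$ (s,b) * x $ b))"
    unfolding sum_subtractf[symmetric]
    by (intro sum.cong refl) (simp add: algebra_simps sum_distrib_right sum_distrib_left)
  also have "(\<Sum>b<p. \<Sum>j\<in>{1..k-1}. z^j * (GamG p k Ph j $$ (s,b) * x $ b)) = (\<Sum>j\<in>{1..k-1}. \<Sum>b<p. z^j * (GamG p k Ph j $$ (s,b) * x $ b))"
    by (rule sum.swap)
  also have "\<dots> = (\<Sum>j\<in>{1..k-1}. z^j * (GamG p k Ph j *\<^sub>v x) $ s)"
  proof (intro sum.cong refl)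
    fix j
    have "(GamG p k Ph j *\<^sub>v x) $ s = (\<Sum>b<p. GamG p k Ph j $$ (s,b) * x $ b)"
      using x s by (intro mv_index[of _ p p]) (auto simp: GamG_def)
    then show "(\<Sum>b<p. z^j * (GamG p k Ph j $$ (s,b) * x $ b)) = z^j * (GamG p k Ph j *\<^sub>v x) $ s"
      by (simp add: sum_distrib_left)
  qed
  finally show ?thesis .
qed

lemma GSG_mult:
  assumes x: "x \<in> carrier_vec p" and l: "l < p*(k-1)"
  shows "(GSG p k Ph *\<^sub>v x) $ l = (GamG p k Ph (l div p + 1) *\<^sub>v x) $ (l mod p)"
proof -
  have p: "p > 0" using l by (cases p) auto
  have lm: "l mod p < p" using p by simp
  show ?thesis
    using x l lm by (simp add: GSG_def GamG_def mat_mv del: index_mult_mat_vec)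
qed

lemma DG_mult:
  assumes p: "p > 0" and w: "w \<in> carrier_vec (p*(k-1))" and l: "l < p*(k-1)"
  shows "(DG p k *\<^sub>v w) $ l = - w $ l + (if l + p < p*(k-1) then w $ (l+p) else 0)"
proof -
  let ?n = "p*(k-1)"
  have "(DG p k *\<^sub>v w) $ l = (\<Sum>j<?n. (if l = j then -1 else if j = l + p then 1 else 0) * w $ j)"
    using w l by (simp add: DG_def mat_mv del: index_mult_mat_vec)
  also have "\<dots> = (\<Sum>j<?n. (if j = l then - w $ j else 0)) + (\<Sum>j<?n. (if j = l + p then w $ j else 0))"
    unfolding sum.distrib[symmetric] using p by (intro sum.cong refl) auto
  also have "\<dots> = - w $ l + (if l + p < ?n then w $ (l+p) else 0)"
    using l by (simp add: sum.delta)
  finally show ?thesis .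
qed

lemma EG_mult:
  assumes w: "w \<in> carrier_vec (p*(k-1))" and s: "s < p"
  shows "(transpose_mat (EG p k) *\<^sub>v w) $ s = (if s < p*(k-1) then w $ s else 0)"
proof -
  let ?n = "p*(k-1)"
  have "(transpose_mat (EG p k) *\<^sub>v w) $ s = (\<Sum>j<?n. (if j = s then w $ j else 0))"
  proof -
    have "(transpose_mat (EG p k) *\<^sub>v w) $ s = (\<Sum>j<?n. (if j = s then 1 else 0) * w $ j)"
      using w s unfolding EG_def by (subst mat_mv_T) auto
    also have "\<dots> = (\<Sum>j<?n. (if j = s then w $ j else 0))" by (intro sum.cong) auto
    finally show ?thesis .
  qed
  also have "\<dots> = (if s < ?n then w $ s else 0)" by (simp add: sum.delta)
  finally show ?thesis .
qed


lemma carriers: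
  "GamG p k Ph j \<in> carrier_mat p p" "PhiG p k Ph z \<in> carrier_mat p p" "PsiG p k Ph z \<in> carrier_mat p p"
  "GSG p k Ph \<in> carrier_mat (p*(k-1)) p" "DG p k \<in> carrier_mat (p*(k-1)) (p*(k-1))"
  "EG p k \<in> carrier_mat (p*(k-1)) p"
  by (auto simp: GamG_def PhiG_def PsiG_def GSG_def DG_def EG_def)

lemma smult_mv:
  fixes M :: "'a::comm_ring_1 mat"
  assumes "M \<in> carrier_mat n m" "x \<in> carrier_vec m"
  shows "(c \<cdot>\<^sub>m M) *\<^sub>v x = c \<cdot>\<^sub>v (M *\<^sub>v x)"
  by (rule eq_vecI) (use assms in \<open>auto simp: scalar_prod_def sum_distrib_left algebra_simps\<close>)

lemma mv_uminus:
  fixes M :: "'a::comm_ring_1 mat"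
  assumes "M \<in> carrier_mat n m" "x \<in> carrier_vec m"
  shows "M *\<^sub>v (- x) = - (M *\<^sub>v x)"
  by (rule eq_vecI) (use assms in \<open>auto simp: scalar_prod_def sum_negf[symmetric]\<close>)

lemma eig_bound:
  fixes Ph :: "nat \<Rightarrow> complex mat" and A Bt P0i :: "complex mat"
  assumes p: "p > 0" and k: "k \<ge> 1"
    and Ph: "\<And>i. i \<le> k \<Longrightarrow> Ph i \<in> carrier_mat p p"
    and A: "A \<in> carrier_mat p r" and Bt: "Bt \<in> carrier_mat r p" and P0i: "P0i \<in> carrier_mat p p"
    and inv: "Ph 0 * P0i = 1\<^sub>m p"
    and AB1: "A * Bt = - PhiG p k Ph 1"
    and roots: "\<And>z. det (PhiG p k Ph z) = 0 \<Longrightarrow> z = 1 \<or> 1 < cmod z"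
    and G1: "det (four_block_mat (PsiG p k Ph 1) A Bt (0\<^sub>m r r)) \<noteq> 0"
    and ev: "eigenvalue (MG p k r Ph A Bt P0i) \<mu>"
  shows "cmod \<mu> < 1"
proof -
  define n1 where "n1 = p*(k-1)"
  have GS: "GSG p k Ph \<in> carrier_mat n1 p" and D: "(DG p k :: complex mat) \<in> carrier_mat n1 n1"
    and ET: "transpose_mat (EG p k :: complex mat) \<in> carrier_mat p n1" unfolding n1_def using carriers by auto
  have TB: "TBG p k r Ph Bt P0i \<in> carrier_mat (r + n1) (p + n1)"
    unfolding TBG_def n1_def[symmetric] using Bt P0i GS D by (intro four_block_carrier_mat) auto
  have AB: "ABG p k r A \<in> carrier_mat (p + n1) (r + n1)"
    unfolding ABG_def n1_def[symmetric] using A ET by (intro four_block_carrier_mat) auto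
  have M: "MG p k r Ph A Bt P0i \<in> carrier_mat (r + n1) (r + n1)"
    unfolding MG_def n1_def[symmetric] using TB AB by auto
  from ev obtain v where v: "v \<in> carrier_vec (r + n1)" "v \<noteq> 0\<^sub>v (r + n1)"
    "MG p k r Ph A Bt P0i *\<^sub>v v = \<mu> \<cdot>\<^sub>v v"
    unfolding eigenvalue_def eigenvector_def using M by auto
  define a where "a = vec_first v r"
  define w where "w = vec_last v n1"
  have a: "a \<in> carrier_vec r" and w: "w \<in> carrier_vec n1" unfolding a_def w_def by auto
  have vaw: "v = a @\<^sub>v w" unfolding a_def w_def using vec_first_last_append[OF v(1)] by simp
  define y where "y = A *\<^sub>v a + transpose_mat (EG p k) *\<^sub>v w"
  define x where "x = P0i *\<^sub>v y"
  have y: "y \<in> carrier_vec p" unfolding y_def using mult_mat_vec_carrier[OF A a] mult_mat_vec_carrier[OF ET w] by simp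
  have x: "x \<in> carrier_vec p" unfolding x_def using P0i y by auto
  have ABv: "ABG p k r A *\<^sub>v v = y @\<^sub>v w"
    unfolding vaw ABG_def n1_def[symmetric]
    by (subst four_block_mat_mult_vec[OF A ET _ _ a w]) (use w a in \<open>auto simp: y_def\<close>)
  have TBv: "TBG p k r Ph Bt P0i *\<^sub>v (y @\<^sub>v w) = (Bt *\<^sub>v x) @\<^sub>v (GSG p k Ph *\<^sub>v x + DG p k *\<^sub>v w)"
    unfolding TBG_def n1_def[symmetric]
    by (subst four_block_mat_mult_vec[OF _ _ _ D y w])
       (use Bt P0i GS y w in \<open>auto simp: x_def assoc_mult_mat_vec\<close>)
  have Mv: "MG p k r Ph A Bt P0i *\<^sub>v v = v + ((Bt *\<^sub>v x) @\<^sub>v (GSG p k Ph *\<^sub>v x + DG p k *\<^sub>v w))"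
  proof -
    have "MG p k r Ph A Bt P0i *\<^sub>v v = 1\<^sub>m (r + n1) *\<^sub>v v + (TBG p k r Ph Bt P0i * ABG p k r A) *\<^sub>v v"
      unfolding MG_def n1_def[symmetric]
      by (rule add_mult_distrib_mat_vec) (use TB AB v in auto)
    also have "\<dots> = v + TBG p k r Ph Bt P0i *\<^sub>v (ABG p k r A *\<^sub>v v)"
      using assoc_mult_mat_vec[OF TB AB v(1)] v(1) by simp
    finally show ?thesis unfolding ABv TBv .
  qed
  have dBt: "dim_row Bt = r" "dim_col Bt = p" using Bt by auto
  have dGS: "dim_row (GSG p k Ph) = n1" "dim_col (GSG p k Ph) = p" using GS by auto
  have dD: "dim_row (DG p k :: complex mat) = n1" "dim_col (DG p k :: complex mat) = n1" using D by auto
  have dA: "dim_row A = p" "dim_col A = r" using A by auto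
  have E1: "\<mu> * a $ i = a $ i + (Bt *\<^sub>v x) $ i" if i: "i < r" for i
  proof -
    have "(MG p k r Ph A Bt P0i *\<^sub>v v) $ i = (\<mu> \<cdot>\<^sub>v v) $ i" using v(3) by simp
    then show ?thesis unfolding Mv using i a w v(1) Bt x GS D by (simp add: vaw)
  qed
  have E2: "\<mu> * w $ l = w $ l + (GSG p k Ph *\<^sub>v x) $ l + (DG p k *\<^sub>v w) $ l" if l: "l < n1" for l
  proof -
    have "(MG p k r Ph A Bt P0i *\<^sub>v v) $ (r + l) = (\<mu> \<cdot>\<^sub>v v) $ (r + l)" using v(3) by simp
    moreover have "(\<mu> \<cdot>\<^sub>v v) $ (r + l) = \<mu> * w $ l" using l a w by (simp add: vaw)
    moreover have "((Bt *\<^sub>v x) @\<^sub>v (GSG p k Ph *\<^sub>v x + DG p k *\<^sub>v w)) $ (r + l) = (GSG p k Ph *\<^sub>v x) $ l + (DG p k *\<^sub>v w) $ l"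
      using l dBt dGS dD w x by (subst index_append_vec(1)) simp_all
    moreover have "(v + ((Bt *\<^sub>v x) @\<^sub>v (GSG p k Ph *\<^sub>v x + DG p k *\<^sub>v w))) $ (r + l) = v $ (r + l) + ((Bt *\<^sub>v x) @\<^sub>v (GSG p k Ph *\<^sub>v x + DG p k *\<^sub>v w)) $ (r + l)"
      using l Bt GS D w x by (intro index_add_vec(1)) simp
    moreover have "v $ (r + l) = w $ l" using a w l by (simp add: vaw)
    ultimately show ?thesis unfolding Mv by (simp add: add.assoc)
  qed
  define u where "u j s = (if 1 \<le> j \<and> j < k then w $ ((j-1)*p + s) else 0)" for j s
  define g where "g j s = (GamG p k Ph j *\<^sub>v x) $ s" for j s
  have R: "\<mu> * u j s = g j s + u (Suc j) s" if j: "1 \<le> j" "j < k" and s: "s < p" for j s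
  proof -
    define l where "l = (j-1)*p + s"
    have jp: "(j-1)*p + p = j*p" using j by (cases j) auto
    have "j*p \<le> (k-1)*p" using j by (intro mult_le_mono1) simp
    hence "(j-1)*p + p \<le> (k-1)*p" using jp by simp
    hence l: "l < n1" unfolding l_def n1_def using s by (simp add: mult.commute)
    have ldiv: "l div p = j - 1" and lmod: "l mod p = s" unfolding l_def using s by auto
    have "(GSG p k Ph *\<^sub>v x) $ l = g j s"
      unfolding g_def using GSG_mult[OF x l[unfolded n1_def]] ldiv lmod j by simp
    moreover have "(DG p k *\<^sub>v w) $ l = - w $ l + u (Suc j) s"
    proof -
      have eq: "(l + p < n1) = (Suc j < k)"
      proof
        assume "l + p < n1"
        moreover have "l + p = j*p + s" unfolding l_def using jp by simp
        ultimately have "j*p + s < (k-1)*p" unfolding n1_def by (simp add: mult.commute)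
        hence "j*p < (k-1)*p" by linarith
        hence "j < k - 1" by (simp add: mult_less_cancel2)
        thus "Suc j < k" by simp
      next
        assume "Suc j < k"
        hence "Suc j \<le> k - 1" by simp
        hence "(Suc j)*p \<le> (k-1)*p" by (rule mult_le_mono1)
        moreover have "l + p < (Suc j)*p" unfolding l_def using s j by (cases j) auto
        ultimately show "l + p < n1" unfolding n1_def by (simp add: mult.commute)
      qed
      have idx: "l + p = (Suc j - 1)*p + s" unfolding l_def using j by (cases j) auto
      show ?thesis using DG_mult[OF p w[unfolded n1_def] l[unfolded n1_def]] eq idx
        unfolding u_def n1_def[symmetric] by auto
    qed
    moreover have "w $ l = u j s" unfolding u_def l_def using j by simp
    ultimately show ?thesis using E2[OF l] by (simp add: algebra_simps)
  qed
  have Y: "y $ s = (A *\<^sub>v a) $ s + u 1 s" if s: "s < p" for s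
  proof -
    have "(transpose_mat (EG p k) *\<^sub>v w) $ s = u 1 s"
    proof (cases "k = 1")
      case True
      then show ?thesis using EG_mult[OF w[unfolded n1_def] s] unfolding u_def by simp
    next
      case False
      hence "1 \<le> k - 1" using k by simp
      hence "p \<le> p*(k-1)" using mult_le_mono2[of 1 "k-1" p] by simp
      hence "s < p*(k-1)" using s by linarith
      then show ?thesis using EG_mult[OF w[unfolded n1_def] s] False k unfolding u_def by simp
    qed
    then show ?thesis unfolding y_def using s A a ET w by simp
  qed
  have P0x: "Ph 0 *\<^sub>v x = y"
    unfolding x_def using assoc_mult_mat_vec[OF Ph[of 0] P0i y] inv y by simp
  have P0x_s: "(\<Sum>b<p. Ph 0 $$ (s,b) * x $ b) = y $ s" if s: "s < p" for s
    using mv_index[OF Ph[of 0] x s] P0x by simp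
  show ?thesis
  proof (cases "\<mu> = 0")
    case True then show ?thesis by simp
  next
    case mu0: False
    define z where "z = inverse \<mu>"
    have zmu: "z * \<mu> = 1" unfolding z_def using mu0 by simp
    have tel: "(\<Sum>j\<in>{1..k-1}. z^j * g j s) = u 1 s" if s: "s < p" for s
    proof -
      have "(\<Sum>j\<in>{1..k-1}. z^j * g j s) = (\<Sum>j\<in>{1..k-1}. z^(j-1) * u j s - z^j * u (Suc j) s)"
      proof (intro sum.cong refl)
        fix j assume j: "j \<in> {1..k-1}"
        have jk: "1 \<le> j" "j < k" using j k by auto
        have "z^j * g j s = z^j * (\<mu> * u j s - u (Suc j) s)" using R[OF jk s] by simp
        also have "\<dots> = (z^j * \<mu>) * u j s - z^j * u (Suc j) s" by (simp add: algebra_simps)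
        also have "z^j * \<mu> = z^(j-1)" using j zmu by (cases j) (auto simp: algebra_simps)
        finally show "z^j * g j s = z^(j-1) * u j s - z^j * u (Suc j) s" .
      qed
      also have "\<dots> = u 1 s - z^(k-1) * u (Suc (k-1)) s" by (rule tele)
      also have "u (Suc (k-1)) s = 0" unfolding u_def using k by simp
      finally show ?thesis by simp
    qed
    have PsiX: "PsiG p k Ph z *\<^sub>v x = A *\<^sub>v a"
    proof (rule eq_vecI)
      fix s assume "s < dim_vec (A *\<^sub>v a)"
      hence s: "s < p" using A by simp
      show "(PsiG p k Ph z *\<^sub>v x) $ s = (A *\<^sub>v a) $ s"
        using PsiG_mult[OF x s, of k Ph z] tel[OF s] P0x_s[OF s] Y[OF s] unfolding g_def by simp
    qed (use A in \<open>simp add: PsiG_def\<close>)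
    have Btx: "Bt *\<^sub>v x = (\<mu> - 1) \<cdot>\<^sub>v a"
    proof (rule eq_vecI)
      fix i assume "i < dim_vec ((\<mu> - 1) \<cdot>\<^sub>v a)"
      hence i: "i < r" using a by simp
      show "(Bt *\<^sub>v x) $ i = ((\<mu> - 1) \<cdot>\<^sub>v a) $ i" using E1[OF i] i a by (simp add: algebra_simps)
    qed (use Bt a in simp)
    have nz: False if x0: "x = 0\<^sub>v p" and a0: "a = 0\<^sub>v r"
    proof -
      have g0: "g j s = 0" if "s < p" for j s unfolding g_def x0 using that by (simp add: GamG_def)
      have u0: "\<forall>j. j + d = k \<longrightarrow> 1 \<le> j \<longrightarrow> (\<forall>s<p. u j s = 0)" for d
      proof (induction d)
        case 0 then show ?case unfolding u_def by auto
      next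
        case (Suc d)
        show ?case
        proof (intro allI impI)
          fix j s assume jd: "j + Suc d = k" and j1: "1 \<le> j" and s: "s < p"
          have "u (Suc j) s = 0" using Suc.IH jd s by auto
          hence "\<mu> * u j s = 0" using R[of j s] jd j1 s g0[OF s] by simp
          thus "u j s = 0" using mu0 by simp
        qed
      qed
      have w0: "w = 0\<^sub>v n1"
      proof (rule eq_vecI)
        fix l assume "l < dim_vec (0\<^sub>v n1)"
        hence l: "l < n1" by simp
        define j where "j = l div p + 1"
        have lp: "l div p < k - 1" using l p unfolding n1_def by (simp add: div_less_iff_less_mult mult.commute)
        have j: "1 \<le> j" "j < k" unfolding j_def using lp by auto
        have "u j (l mod p) = w $ ((l div p) * p + l mod p)" unfolding u_def using j unfolding j_def by simp
        hence "u j (l mod p) = w $ l" by (simp only: div_mult_mod_eq)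
        moreover have "u j (l mod p) = 0" using u0[of "k - j"] j p by simp
        ultimately show "w $ l = 0\<^sub>v n1 $ l" using l by simp
      qed (use w in simp)
      have "v = 0\<^sub>v (r + n1)" unfolding vaw a0 w0 by (rule eq_vecI) auto
      with v(2) show False by simp
    qed
    have Psi: "PsiG p k Ph z \<in> carrier_mat p p" "PsiG p k Ph 1 \<in> carrier_mat p p"
      and Phi1: "PhiG p k Ph 1 \<in> carrier_mat p p" by (auto simp: PsiG_def PhiG_def)
    show ?thesis
    proof (cases "\<mu> = 1")
      case True
      have z1: "z = 1" unfolding z_def True by simp
      define q where "q = x @\<^sub>v (- a)"
      have q: "q \<in> carrier_vec (p + r)" unfolding q_def using x a by auto
      have G: "four_block_mat (PsiG p k Ph 1) A Bt (0\<^sub>m r r) \<in> carrier_mat (p + r) (p + r)"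
        using Psi A Bt by (intro four_block_carrier_mat) auto
      have "four_block_mat (PsiG p k Ph 1) A Bt (0\<^sub>m r r) *\<^sub>v q
          = (PsiG p k Ph 1 *\<^sub>v x + A *\<^sub>v (- a)) @\<^sub>v (Bt *\<^sub>v x + 0\<^sub>m r r *\<^sub>v (- a))"
        unfolding q_def by (rule four_block_mat_mult_vec[OF Psi(2) A Bt _ x]) (use a in auto)
      also have "\<dots> = 0\<^sub>v p @\<^sub>v 0\<^sub>v r"
      proof -
        have "PsiG p k Ph 1 *\<^sub>v x + A *\<^sub>v (- a) = 0\<^sub>v p"
          using PsiX[unfolded z1] mv_uminus[OF A a] A a by auto
        moreover have "Bt *\<^sub>v x + 0\<^sub>m r r *\<^sub>v (- a) = 0\<^sub>v r"
          using Btx True a by auto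
        ultimately show ?thesis by simp
      qed
      also have "\<dots> = 0\<^sub>v (p + r)" by (rule eq_vecI) auto
      finally have Gq: "four_block_mat (PsiG p k Ph 1) A Bt (0\<^sub>m r r) *\<^sub>v q = 0\<^sub>v (p + r)" .
      have "q \<noteq> 0\<^sub>v (p + r)"
      proof
        assume q0: "q = 0\<^sub>v (p + r)"
        have "x = 0\<^sub>v p"
        proof (rule eq_vecI)
          fix i assume "i < dim_vec (0\<^sub>v p)"
          hence i: "i < p" by simp
          have "q $ i = 0" using q0 i by simp
          thus "x $ i = 0\<^sub>v p $ i" unfolding q_def using i x a by simp
        qed (use x in simp)
        moreover have "a = 0\<^sub>v r"
        proof (rule eq_vecI)
          fix i assume "i < dim_vec (0\<^sub>v r)"
          hence i: "i < r" by simp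
          have "q $ (p + i) = 0" using q0 i by simp
          thus "a $ i = 0\<^sub>v r $ i" unfolding q_def using i x a by simp
        qed (use a in simp)
        ultimately show False using nz by simp
      qed
      hence "det (four_block_mat (PsiG p k Ph 1) A Bt (0\<^sub>m r r)) = 0"
        using det_0_iff_vec_prod_zero[OF G] q Gq by blast
      with G1 show ?thesis by simp
    next
      case False
      have xnz: "x \<noteq> 0\<^sub>v p"
      proof
        assume x0: "x = 0\<^sub>v p"
        have "a = 0\<^sub>v r"
        proof (rule eq_vecI)
          fix i assume "i < dim_vec (0\<^sub>v r)"
          hence i: "i < r" by simp
          have "(Bt *\<^sub>v x) $ i = 0" using x0 i Bt by simp
          hence "(\<mu> - 1) * a $ i = 0" using Btx i a by (metis index_smult_vec(1) carrier_vecD)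
          thus "a $ i = 0\<^sub>v r $ i" using False i by simp
        qed (use a in simp)
        with x0 nz show False by simp
      qed
      have "PhiG p k Ph z *\<^sub>v x = 0\<^sub>v p"
      proof -
        have Phi1x: "PhiG p k Ph 1 *\<^sub>v x = - ((\<mu> - 1) \<cdot>\<^sub>v (A *\<^sub>v a))"
        proof -
          have "PhiG p k Ph 1 = - (A * Bt)" using AB1 by simp
          hence "PhiG p k Ph 1 *\<^sub>v x = - (A * Bt *\<^sub>v x)" using A Bt x by simp
          also have "A * Bt *\<^sub>v x = A *\<^sub>v (Bt *\<^sub>v x)" using A Bt x by (simp add: assoc_mult_mat_vec)
          also have "\<dots> = (\<mu> - 1) \<cdot>\<^sub>v (A *\<^sub>v a)" unfolding Btx using mult_mat_vec[OF A a] .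
          finally show ?thesis .
        qed
        have "PhiG p k Ph z *\<^sub>v x = ((1 - z) \<cdot>\<^sub>m PsiG p k Ph z) *\<^sub>v x + (z \<cdot>\<^sub>m PhiG p k Ph 1) *\<^sub>v x"
          by (subst PhiG_split, rule add_mult_distrib_mat_vec) (use Psi Phi1 x in auto)
        also have "\<dots> = (1 - z) \<cdot>\<^sub>v (A *\<^sub>v a) + z \<cdot>\<^sub>v (- ((\<mu> - 1) \<cdot>\<^sub>v (A *\<^sub>v a)))"
          using smult_mv[OF Psi(1) x] smult_mv[OF Phi1 x] PsiX Phi1x by simp
        also have "\<dots> = 0\<^sub>v p"
        proof (rule eq_vecI)
          fix s assume "s < dim_vec (0\<^sub>v p)"
          hence s: "s < p" by simp
          have "(1 - z) * (A *\<^sub>v a) $ s + z * (- ((\<mu> - 1) * (A *\<^sub>v a) $ s)) = (A *\<^sub>v a) $ s * (1 - z * \<mu>)"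
            by (simp add: algebra_simps)
          also have "\<dots> = 0" using zmu by simp
          finally show "((1 - z) \<cdot>\<^sub>v (A *\<^sub>v a) + z \<cdot>\<^sub>v (- ((\<mu> - 1) \<cdot>\<^sub>v (A *\<^sub>v a)))) $ s = 0\<^sub>v p $ s"
            using s A a by simp
        qed (use A a in simp)
        finally show ?thesis .
      qed
      moreover have PhiC: "PhiG p k Ph z \<in> carrier_mat p p" by (simp add: PhiG_def)
      ultimately have "det (PhiG p k Ph z) = 0" using det_0_iff_vec_prod_zero[OF PhiC] xnz x by blast
      hence "z = 1 \<or> 1 < cmod z" by (rule roots)
      moreover have "z \<noteq> 1" using False unfolding z_def by (metis inverse_1 inverse_inverse_eq)
      ultimately have "1 < cmod z" by simp
      moreover have "cmod \<mu> = inverse (cmod z)" unfolding z_def by (simp add: norm_inverse)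
      ultimately show ?thesis by (simp add: inverse_less_1_iff)
    qed
  qed
qed


lemma h_hom: "comm_ring_hom (\<lambda>q. poly (map_poly complex_of_real q) z)"
proof -
  interpret m: map_poly_comm_ring_hom "complex_of_real" ..
  show ?thesis by unfold_locales (simp_all add: m.hom_add m.hom_mult)
qed

lemma poly_det_eval:
  fixes M :: "'a::comm_ring_1 poly mat"
  shows "poly (det M) z = det (map_mat (\<lambda>q. poly q z) M)"
  using comm_ring_hom.hom_det[OF poly_hom.comm_ring_hom_axioms[of z], of M] by simp

lemma poly_detPhi:
  assumes dims: "\<forall>i\<le>k. \<Phi> i \<in> carrier_mat p p"
  shows "poly (detPhi p k \<Phi>) z = det (PhiG p k (\<lambda>i. map_mat complex_of_real (\<Phi> i)) z)"
proof -
  let ?h = "\<lambda>q. poly (map_poly complex_of_real q) z"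
  interpret hh: comm_ring_hom ?h by (rule h_hom)
  have "poly (detPhi p k \<Phi>) z = ?h (det (PhiPoly p k \<Phi>))" unfolding detPhi_def by simp
  also have "\<dots> = det (map_mat ?h (PhiPoly p k \<Phi>))" by (rule hh.hom_det[symmetric])
  also have "map_mat ?h (PhiPoly p k \<Phi>) = PhiG p k (\<lambda>i. map_mat complex_of_real (\<Phi> i)) z"
  proof (rule eq_matI)
    fix a b assume ab: "a < dim_row (PhiG p k (\<lambda>i. map_mat complex_of_real (\<Phi> i)) z)"
      "b < dim_col (PhiG p k (\<lambda>i. map_mat complex_of_real (\<Phi> i)) z)"
    hence ab: "a < p" "b < p" by (auto simp: PhiG_def)
    have d: "i \<le> k \<Longrightarrow> dim_row (\<Phi> i) = p \<and> dim_col (\<Phi> i) = p" for i using dims by auto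
    have "map_mat ?h (PhiPoly p k \<Phi>) $$ (a,b) = ?h ([:\<Phi> 0 $$ (a,b):] - (\<Sum>i\<in>{1..k}. monom (\<Phi> i $$ (a,b)) i))"
      using ab unfolding PhiPoly_def by simp
    also have "\<dots> = of_real (\<Phi> 0 $$ (a,b)) - (\<Sum>i\<in>{1..k}. of_real (\<Phi> i $$ (a,b)) * z^i)"
      by (simp add: hh.hom_minus hh.hom_sum map_poly_monom poly_monom map_poly_simps)
    also have "\<dots> = PhiG p k (\<lambda>i. map_mat complex_of_real (\<Phi> i)) z $$ (a,b)"
      using ab d by (simp add: PhiG_def)
    finally show "map_mat ?h (PhiPoly p k \<Phi>) $$ (a,b) = PhiG p k (\<lambda>i. map_mat complex_of_real (\<Phi> i)) z $$ (a,b)" .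
  qed (auto simp: PhiPoly_def PhiG_def)
  finally show ?thesis .
qed


lemma det_factor:
  fixes Ph :: "nat \<Rightarrow> complex mat" and A Bt :: "complex mat"
  assumes Ph: "\<And>i. i \<le> k \<Longrightarrow> Ph i \<in> carrier_mat p p"
    and A: "A \<in> carrier_mat p r" and Bt: "Bt \<in> carrier_mat r p"
    and AB1: "A * Bt = - PhiG p k Ph 1" and rp: "r \<le> p"
  shows "\<exists>Gd. (\<forall>z. det (PhiG p k Ph z) = (1 - z)^(p - r) * poly Gd z)
             \<and> poly Gd 1 = det (four_block_mat (PsiG p k Ph 1) A Bt (0\<^sub>m r r))"
proof -
  define PhiP where "PhiP = mat p p (\<lambda>(a,b). [:Ph 0 $$ (a,b):] - (\<Sum>i\<in>{1..k}. monom (Ph i $$ (a,b)) i))"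
  define PsiP where "PsiP = mat p p (\<lambda>(a,b). [:Ph 0 $$ (a,b):] - (\<Sum>j\<in>{1..k-1}. monom (GamG p k Ph j $$ (a,b)) j))"
  define AP where "AP = mat p r (\<lambda>(a,b). [:A $$ (a,b):])"
  define BP where "BP = mat r p (\<lambda>(a,b). monom (Bt $$ (a,b)) 1)"
  define LR :: "complex poly mat" where "LR = mat r r (\<lambda>(i,j). if i = j then [:1,-1:] else 0)"
  define GP where "GP = four_block_mat PsiP AP BP LR"
  define ev where "ev z = map_mat (\<lambda>q. poly q z)" for z :: complex
  define Gz where "Gz z = four_block_mat (PsiG p k Ph z) A (z \<cdot>\<^sub>m Bt) ((1 - z) \<cdot>\<^sub>m 1\<^sub>m r)" for z
  have PsiC: "PsiG p k Ph z \<in> carrier_mat p p" "PhiG p k Ph z \<in> carrier_mat p p" for z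
    by (auto simp: PsiG_def PhiG_def)
  have evPhi: "ev z PhiP = PhiG p k Ph z" for z
    unfolding ev_def PhiP_def PhiG_def by (rule eq_matI) (auto simp: poly_sum poly_monom)
  have evG: "ev z GP = Gz z" for z
  proof -
    have "ev z GP = four_block_mat (ev z PsiP) (ev z AP) (ev z BP) (ev z LR)"
      unfolding ev_def GP_def by (rule map_four_block_mat) (auto simp: PsiP_def AP_def BP_def LR_def)
    also have "ev z PsiP = PsiG p k Ph z"
      unfolding ev_def PsiP_def PsiG_def by (rule eq_matI) (auto simp: poly_sum poly_monom)
    also have "ev z AP = A" unfolding ev_def AP_def using A by (intro eq_matI) auto
    also have "ev z BP = z \<cdot>\<^sub>m Bt" unfolding ev_def BP_def using Bt by (intro eq_matI) (auto simp: poly_monom)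
    also have "ev z LR = (1 - z) \<cdot>\<^sub>m 1\<^sub>m r" unfolding ev_def LR_def by (intro eq_matI) auto
    finally show ?thesis unfolding Gz_def .
  qed
  have key: "det (Gz z) * (1 - z)^p = det (PhiG p k Ph z) * (1 - z)^r" for z
  proof -
    define R where "R = four_block_mat ((1 - z) \<cdot>\<^sub>m 1\<^sub>m p) (0\<^sub>m p r) ((- z) \<cdot>\<^sub>m Bt) (1\<^sub>m r)"
    have GzC: "Gz z \<in> carrier_mat (p + r) (p + r)" unfolding Gz_def
      using PsiC A Bt by (intro four_block_carrier_mat) auto
    have RC: "R \<in> carrier_mat (p + r) (p + r)" unfolding R_def
      using Bt by (intro four_block_carrier_mat) auto
    have prod: "Gz z * R = four_block_mat (PhiG p k Ph z) A (0\<^sub>m r p) ((1 - z) \<cdot>\<^sub>m 1\<^sub>m r)"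
    proof -
      have "Gz z * R = four_block_mat
          (PsiG p k Ph z * ((1 - z) \<cdot>\<^sub>m 1\<^sub>m p) + A * ((- z) \<cdot>\<^sub>m Bt))
          (PsiG p k Ph z * 0\<^sub>m p r + A * 1\<^sub>m r)
          ((z \<cdot>\<^sub>m Bt) * ((1 - z) \<cdot>\<^sub>m 1\<^sub>m p) + ((1 - z) \<cdot>\<^sub>m 1\<^sub>m r) * ((- z) \<cdot>\<^sub>m Bt))
          ((z \<cdot>\<^sub>m Bt) * 0\<^sub>m p r + ((1 - z) \<cdot>\<^sub>m 1\<^sub>m r) * 1\<^sub>m r)"
        unfolding Gz_def R_def by (rule mult_four_block_mat) (use PsiC A Bt in auto)
      also have "PsiG p k Ph z * ((1 - z) \<cdot>\<^sub>m 1\<^sub>m p) + A * ((- z) \<cdot>\<^sub>m Bt) = PhiG p k Ph z"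
      proof -
        have e1: "PsiG p k Ph z * ((1 - z) \<cdot>\<^sub>m 1\<^sub>m p) = (1 - z) \<cdot>\<^sub>m PsiG p k Ph z"
          using mult_smult_distrib[OF PsiC(1) one_carrier_mat, of z] right_mult_one_mat[OF PsiC(1)[of z]] by simp
        have e2: "A * ((- z) \<cdot>\<^sub>m Bt) = (- z) \<cdot>\<^sub>m (- PhiG p k Ph 1)"
          using mult_smult_distrib[OF A Bt] AB1 by simp
        show ?thesis unfolding e1 e2 PhiG_split[of p k Ph z]
          by (rule eq_matI) (use PsiC in auto)
      qed
      also have "PsiG p k Ph z * 0\<^sub>m p r + A * 1\<^sub>m r = A" using PsiC(1)[of z] A by simp
      also have "(z \<cdot>\<^sub>m Bt) * ((1 - z) \<cdot>\<^sub>m 1\<^sub>m p) + ((1 - z) \<cdot>\<^sub>m 1\<^sub>m r) * ((- z) \<cdot>\<^sub>m Bt) = 0\<^sub>m r p"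
      proof -
        have e1: "(z \<cdot>\<^sub>m Bt) * ((1 - z) \<cdot>\<^sub>m 1\<^sub>m p) = (1 - z) \<cdot>\<^sub>m (z \<cdot>\<^sub>m Bt)"
          using mult_smult_distrib[OF smult_carrier_mat[OF Bt] one_carrier_mat] Bt by simp
        have e2: "((1 - z) \<cdot>\<^sub>m 1\<^sub>m r) * ((- z) \<cdot>\<^sub>m Bt) = (1 - z) \<cdot>\<^sub>m ((- z) \<cdot>\<^sub>m Bt)"
          using mult_smult_assoc_mat[OF one_carrier_mat smult_carrier_mat[OF Bt]] Bt by simp
        show ?thesis unfolding e1 e2 by (rule eq_matI) (use Bt in \<open>auto simp: algebra_simps\<close>)
      qed
      also have "(z \<cdot>\<^sub>m Bt) * 0\<^sub>m p r + ((1 - z) \<cdot>\<^sub>m 1\<^sub>m r) * 1\<^sub>m r = (1 - z) \<cdot>\<^sub>m 1\<^sub>m r"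
        using Bt by simp
      finally show ?thesis .
    qed
    have "det (Gz z * R) = det (Gz z) * det R" by (rule det_mult[OF GzC RC])
    also have "det R = (1 - z)^p"
      unfolding R_def
      by (subst det_four_block_mat_upper_right_zero[of _ p _ r]) (use Bt in \<open>auto simp: det_smult\<close>)
    also have "det (Gz z * R) = det (PhiG p k Ph z) * (1 - z)^r"
      unfolding prod
      by (subst det_four_block_mat_lower_left_zero[of _ p _ r]) (use PsiC A in \<open>auto simp: det_smult\<close>)
    finally show ?thesis by simp
  qed
  define X :: "complex poly" where "X = [:1, -1:]"
  have polyX: "poly X z = 1 - z" for z unfolding X_def by simp
  have "poly (det GP * X^p) = poly (det PhiP * X^r)"
  proof
    fix z
    have "poly (det GP) z = det (Gz z)" using poly_det_eval[of GP z] evG[of z] unfolding ev_def by simp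
    moreover have "poly (det PhiP) z = det (PhiG p k Ph z)" using poly_det_eval[of PhiP z] evPhi[of z] unfolding ev_def by simp
    ultimately show "poly (det GP * X^p) z = poly (det PhiP * X^r) z" using key[of z] by (simp add: polyX poly_power)
  qed
  hence eq: "det GP * X^p = det PhiP * X^r" by (simp add: poly_eq_poly_eq_iff)
  have "X^p = X^(p - r) * X^r" using rp by (simp add: power_add[symmetric])
  hence "(det GP * X^(p - r)) * X^r = det PhiP * X^r" using eq by (simp add: mult.assoc)
  moreover have Xnz: "X \<noteq> 0" unfolding X_def by simp
  ultimately have fac: "det PhiP = det GP * X^(p - r)" by auto
  show ?thesis
  proof (intro exI[of _ "det GP"] conjI allI)
    fix z
    have "det (PhiG p k Ph z) = poly (det PhiP) z" using poly_det_eval[of PhiP z] evPhi[of z] unfolding ev_def by simp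
    also have "\<dots> = (1 - z)^(p - r) * poly (det GP) z" unfolding fac by (simp add: polyX poly_power)
    finally show "det (PhiG p k Ph z) = (1 - z)^(p - r) * poly (det GP) z" .
  next
    have "poly (det GP) 1 = det (Gz 1)" using poly_det_eval[of GP 1] evG[of 1] unfolding ev_def by simp
    also have "Gz 1 = four_block_mat (PsiG p k Ph 1) A Bt (0\<^sub>m r r)"
      unfolding Gz_def by (intro cong_four_block_mat refl) (auto intro!: eq_matI)
    finally show "poly (det GP) 1 = det (four_block_mat (PsiG p k Ph 1) A Bt (0\<^sub>m r r))" .
  qed
qed


lemma gfun_lin:
  assumes dims: "\<forall>i\<le>k. \<Phi> i \<in> carrier_mat p p" and z: "z \<in> carrier_vec p"
  shows "gfun p k (\<lambda>i z. \<Phi> i *\<^sub>v z) j z = Gamma p k \<Phi> j *\<^sub>v z"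
proof (rule eq_vecI)
  fix l assume "l < dim_vec (Gamma p k \<Phi> j *\<^sub>v z)"
  hence l: "l < p" by (simp add: Gamma_def)
  have "gfun p k (\<lambda>i z. \<Phi> i *\<^sub>v z) j z $ l = - (\<Sum>i\<in>{j+1..k}. \<Sum>b<p. \<Phi> i $$ (l,b) * z $ b)"
    unfolding gfun_def using l dims z by (simp add: mv_index[of _ p p])
  also have "\<dots> = (\<Sum>b<p. (- (\<Sum>i\<in>{j+1..k}. \<Phi> i $$ (l,b))) * z $ b)"
    by (subst sum.swap) (simp add: sum_distrib_right sum_negf)
  also have "\<dots> = (Gamma p k \<Phi> j *\<^sub>v z) $ l"
    unfolding Gamma_def using l z by (simp add: mat_mv del: index_mult_mat_vec)
  finally show "gfun p k (\<lambda>i z. \<Phi> i *\<^sub>v z) j z $ l = (Gamma p k \<Phi> j *\<^sub>v z) $ l" .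
qed (simp add: gfun_def Gamma_def)

lemma pifun_lin:
  assumes dims: "\<forall>i\<le>k. \<Phi> i \<in> carrier_mat p p" and z: "z \<in> carrier_vec p"
  shows "pifun p k (\<lambda>i z. \<Phi> i *\<^sub>v z) z = - (PhiAt p k \<Phi> 1 *\<^sub>v z)"
proof (rule eq_vecI)
  fix l assume "l < dim_vec (- (PhiAt p k \<Phi> 1 *\<^sub>v z))"
  hence l: "l < p" by (simp add: PhiAt_def)
  have "pifun p k (\<lambda>i z. \<Phi> i *\<^sub>v z) z $ l = - (\<Sum>b<p. \<Phi> 0 $$ (l,b) * z $ b) + (\<Sum>i\<in>{1..k}. \<Sum>b<p. \<Phi> i $$ (l,b) * z $ b)"
    unfolding pifun_def using l dims z by (simp add: mv_index[of _ p p])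
  also have "\<dots> = - (\<Sum>b<p. (\<Phi> 0 $$ (l,b) - (\<Sum>i\<in>{1..k}. \<Phi> i $$ (l,b) * 1^i)) * z $ b)"
  proof -
    have "(\<Sum>b<p. (\<Phi> 0 $$ (l,b) - (\<Sum>i\<in>{1..k}. \<Phi> i $$ (l,b) * 1^i)) * z $ b)
        = (\<Sum>b<p. \<Phi> 0 $$ (l,b) * z $ b) - (\<Sum>b<p. \<Sum>i\<in>{1..k}. \<Phi> i $$ (l,b) * z $ b)"
      unfolding sum_subtractf[symmetric] by (intro sum.cong refl) (simp add: algebra_simps sum_distrib_left)
    also have "(\<Sum>b<p. \<Sum>i\<in>{1..k}. \<Phi> i $$ (l,b) * z $ b) = (\<Sum>i\<in>{1..k}. \<Sum>b<p. \<Phi> i $$ (l,b) * z $ b)"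
      by (rule sum.swap)
    finally show ?thesis by simp
  qed
  also have "\<dots> = (- (PhiAt p k \<Phi> 1 *\<^sub>v z)) $ l"
    unfolding PhiAt_def using l z by (simp add: mat_mv del: index_mult_mat_vec)
  finally show "pifun p k (\<lambda>i z. \<Phi> i *\<^sub>v z) z $ l = (- (PhiAt p k \<Phi> 1 *\<^sub>v z)) $ l" .
qed (simp add: pifun_def PhiAt_def)

lemma psi_lin:
  assumes dims: "\<forall>i\<le>k. \<Phi> i \<in> carrier_mat p p" and z: "z \<in> carrier_vec p"
    and ap: "\<alpha>perp \<in> carrier_mat p q"
  shows "psi p k (\<lambda>i z. \<Phi> i *\<^sub>v z) \<alpha>perp z =
    (transpose_mat \<alpha>perp * mat p p (\<lambda>(a,b). \<Phi> 0 $$ (a,b) - (\<Sum>i\<in>{1..k-1}. Gamma p k \<Phi> i $$ (a,b)))) *\<^sub>v z"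
proof -
  let ?N = "mat p p (\<lambda>(a,b). \<Phi> 0 $$ (a,b) - (\<Sum>i\<in>{1..k-1}. Gamma p k \<Phi> i $$ (a,b)))"
  have "vec p (\<lambda>l. (\<Phi> 0 *\<^sub>v z) $ l - (\<Sum>i\<in>{1..k-1}. gfun p k (\<lambda>i z. \<Phi> i *\<^sub>v z) i z $ l)) = ?N *\<^sub>v z"
  proof (rule eq_vecI)
    fix l assume "l < dim_vec (?N *\<^sub>v z)"
    hence l: "l < p" by simp
    have G: "(Gamma p k \<Phi> i *\<^sub>v z) $ l = (\<Sum>b<p. Gamma p k \<Phi> i $$ (l,b) * z $ b)" for i
      using l z by (intro mv_index[of _ p p]) (auto simp: Gamma_def)
    have "vec p (\<lambda>l. (\<Phi> 0 *\<^sub>v z) $ l - (\<Sum>i\<in>{1..k-1}. gfun p k (\<lambda>i z. \<Phi> i *\<^sub>v z) i z $ l)) $ l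
        = (\<Sum>b<p. \<Phi> 0 $$ (l,b) * z $ b) - (\<Sum>i\<in>{1..k-1}. \<Sum>b<p. Gamma p k \<Phi> i $$ (l,b) * z $ b)"
      using l dims z gfun_lin[OF dims z] G by (simp add: mv_index[of _ p p])
    also have "\<dots> = (\<Sum>b<p. (\<Phi> 0 $$ (l,b) - (\<Sum>i\<in>{1..k-1}. Gamma p k \<Phi> i $$ (l,b))) * z $ b)"
    proof -
      have "(\<Sum>b<p. (\<Phi> 0 $$ (l,b) - (\<Sum>i\<in>{1..k-1}. Gamma p k \<Phi> i $$ (l,b))) * z $ b)
        = (\<Sum>b<p. \<Phi> 0 $$ (l,b) * z $ b) - (\<Sum>b<p. \<Sum>i\<in>{1..k-1}. Gamma p k \<Phi> i $$ (l,b) * z $ b)"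
        unfolding sum_subtractf[symmetric] by (intro sum.cong refl) (simp add: algebra_simps sum_distrib_left)
      also have "(\<Sum>b<p. \<Sum>i\<in>{1..k-1}. Gamma p k \<Phi> i $$ (l,b) * z $ b) = (\<Sum>i\<in>{1..k-1}. \<Sum>b<p. Gamma p k \<Phi> i $$ (l,b) * z $ b)"
        by (rule sum.swap)
      finally show ?thesis by simp
    qed
    also have "\<dots> = (?N *\<^sub>v z) $ l" using l z by (simp add: mat_mv del: index_mult_mat_vec)
    finally show "vec p (\<lambda>l. (\<Phi> 0 *\<^sub>v z) $ l - (\<Sum>i\<in>{1..k-1}. gfun p k (\<lambda>i z. \<Phi> i *\<^sub>v z) i z $ l)) $ l = (?N *\<^sub>v z) $ l" .
  qed simp
  then show ?thesis unfolding psi_def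
    using assoc_mult_mat_vec[of "transpose_mat \<alpha>perp" q p ?N p z] ap z by simp
qed


abbreviation cm :: "real mat \<Rightarrow> complex mat" where "cm \<equiv> map_mat complex_of_real"

lemma map_add_mat:
  assumes "X \<in> carrier_mat n m" "Y \<in> carrier_mat n m"
  shows "cm (X + Y) = cm X + cm Y"
  by (rule eq_matI) (use assms in auto)

lemma map_GamG:
  assumes dims: "\<forall>i\<le>k. \<Phi> i \<in> carrier_mat p p"
  shows "cm (GamG p k \<Phi> j) = GamG p k (\<lambda>i. cm (\<Phi> i)) j"
proof (rule eq_matI)
  fix a b assume ab: "a < dim_row (GamG p k (\<lambda>i. cm (\<Phi> i)) j)" "b < dim_col (GamG p k (\<lambda>i. cm (\<Phi> i)) j)"
  hence ab: "a < p" "b < p" by (auto simp: GamG_def)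
  have "(\<Sum>i\<in>{j+1..k}. cm (\<Phi> i) $$ (a,b)) = (\<Sum>i\<in>{j+1..k}. complex_of_real (\<Phi> i $$ (a,b)))"
    using dims ab by (intro sum.cong refl) auto
  then show "cm (GamG p k \<Phi> j) $$ (a,b) = GamG p k (\<lambda>i. cm (\<Phi> i)) j $$ (a,b)"
    using ab by (simp add: GamG_def)
qed (auto simp: GamG_def)

lemma map_PhiG1:
  assumes dims: "\<forall>i\<le>k. \<Phi> i \<in> carrier_mat p p"
  shows "cm (PhiAt p k \<Phi> 1) = PhiG p k (\<lambda>i. cm (\<Phi> i)) 1"
proof (rule eq_matI)
  fix a b assume ab: "a < dim_row (PhiG p k (\<lambda>i. cm (\<Phi> i)) 1)" "b < dim_col (PhiG p k (\<lambda>i. cm (\<Phi> i)) 1)"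
  hence ab: "a < p" "b < p" by (auto simp: PhiG_def)
  have "(\<Sum>i\<in>{1..k}. cm (\<Phi> i) $$ (a,b)) = (\<Sum>i\<in>{1..k}. complex_of_real (\<Phi> i $$ (a,b)))"
    using dims ab by (intro sum.cong refl) auto
  moreover have "\<Phi> 0 \<in> carrier_mat p p" using dims by simp
  ultimately show "cm (PhiAt p k \<Phi> 1) $$ (a,b) = PhiG p k (\<lambda>i. cm (\<Phi> i)) 1 $$ (a,b)"
    using ab by (simp add: PhiAt_def PhiG_def)
qed (auto simp: PhiAt_def PhiG_def)

lemma map_MG:
  fixes \<Phi> :: "nat \<Rightarrow> real mat"
  assumes dims: "\<forall>i\<le>k. \<Phi> i \<in> carrier_mat p p" and A: "A \<in> carrier_mat p r"
    and Bt: "Bt \<in> carrier_mat r p" and P0i: "P0i \<in> carrier_mat p p"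
  shows "cm (MG p k r \<Phi> A Bt P0i) = MG p k r (\<lambda>i. cm (\<Phi> i)) (cm A) (cm Bt) (cm P0i)"
proof -
  let ?n = "p*(k-1)"
  have GS: "GSG p k \<Phi> \<in> carrier_mat ?n p" and D: "(DG p k :: real mat) \<in> carrier_mat ?n ?n"
    and E: "(EG p k :: real mat) \<in> carrier_mat ?n p" by (auto simp: GSG_def DG_def EG_def)
  have mGS: "cm (GSG p k \<Phi>) = GSG p k (\<lambda>i. cm (\<Phi> i))"
  proof (rule eq_matI)
    fix a b assume "a < dim_row (GSG p k (\<lambda>i. cm (\<Phi> i)))" "b < dim_col (GSG p k (\<lambda>i. cm (\<Phi> i)))"
    hence ab: "a < ?n" "b < p" by (auto simp: GSG_def)
    hence p: "p > 0" by (cases p) auto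
    have "cm (GamG p k \<Phi> (a div p + 1)) $$ (a mod p, b) = complex_of_real (GamG p k \<Phi> (a div p + 1) $$ (a mod p, b))"
      using ab p by (simp add: GamG_def)
    then show "cm (GSG p k \<Phi>) $$ (a,b) = GSG p k (\<lambda>i. cm (\<Phi> i)) $$ (a,b)"
      using ab map_GamG[OF dims, of "a div p + 1"] by (simp add: GSG_def)
  qed (auto simp: GSG_def)
  have mD: "cm (DG p k) = DG p k" by (rule eq_matI) (auto simp: DG_def)
  have mE: "cm (transpose_mat (EG p k)) = transpose_mat (EG p k)" by (rule eq_matI) (auto simp: EG_def)
  have TB: "TBG p k r \<Phi> Bt P0i \<in> carrier_mat (r + ?n) (p + ?n)"
    unfolding TBG_def using Bt P0i GS D by (intro four_block_carrier_mat) auto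
  have AB: "ABG p k r A \<in> carrier_mat (p + ?n) (r + ?n)"
    unfolding ABG_def using A E by (intro four_block_carrier_mat) auto
  have mTB: "cm (TBG p k r \<Phi> Bt P0i) = TBG p k r (\<lambda>i. cm (\<Phi> i)) (cm Bt) (cm P0i)"
  proof -
    have "cm (TBG p k r \<Phi> Bt P0i) = four_block_mat (cm (Bt * P0i)) (cm (0\<^sub>m r ?n)) (cm (GSG p k \<Phi> * P0i)) (cm (DG p k))"
      unfolding TBG_def by (rule map_four_block_mat) (use Bt P0i GS D in auto)
    also have "cm (Bt * P0i) = cm Bt * cm P0i" by (rule of_real_hom.mat_hom_mult[OF Bt P0i])
    also have "cm (GSG p k \<Phi> * P0i) = cm (GSG p k \<Phi>) * cm P0i" by (rule of_real_hom.mat_hom_mult[OF GS P0i])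
    also have "cm (0\<^sub>m r ?n) = 0\<^sub>m r ?n" by (rule eq_matI) auto
    finally show ?thesis unfolding mGS mD TBG_def .
  qed
  have mAB: "cm (ABG p k r A) = ABG p k r (cm A)"
  proof -
    have "cm (ABG p k r A) = four_block_mat (cm A) (cm (transpose_mat (EG p k))) (cm (0\<^sub>m ?n r)) (cm (1\<^sub>m ?n))"
      unfolding ABG_def by (rule map_four_block_mat) (use A E in auto)
    also have "cm (0\<^sub>m ?n r) = 0\<^sub>m ?n r" by (rule eq_matI) auto
    also have "cm (1\<^sub>m ?n) = 1\<^sub>m ?n" by (rule of_real_hom.mat_hom_one)
    finally show ?thesis unfolding mE ABG_def .
  qed
  have "cm (MG p k r \<Phi> A Bt P0i) = cm (1\<^sub>m (r + ?n)) + cm (TBG p k r \<Phi> Bt P0i * ABG p k r A)"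
    unfolding MG_def by (rule map_add_mat) (use TB AB in auto)
  also have "cm (TBG p k r \<Phi> Bt P0i * ABG p k r A) = cm (TBG p k r \<Phi> Bt P0i) * cm (ABG p k r A)"
    by (rule of_real_hom.mat_hom_mult[OF TB AB])
  also have "cm (1\<^sub>m (r + ?n)) = 1\<^sub>m (r + ?n)" by (rule of_real_hom.mat_hom_one)
  finally show ?thesis unfolding mTB mAB MG_def .
qed


lemma srad_MG_lt1:
  fixes \<Phi> :: "nat \<Rightarrow> real mat"
  assumes p: "p \<ge> 1" and k: "k \<ge> 1" and rp: "r \<le> p"
    and dims: "\<forall>i\<le>k. \<Phi> i \<in> carrier_mat p p"
    and A: "A \<in> carrier_mat p r" and Bt: "Bt \<in> carrier_mat r p" and P0i: "P0i \<in> carrier_mat p p"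
    and inv: "\<Phi> 0 * P0i = 1\<^sub>m p"
    and AB1: "A * Bt = - PhiAt p k \<Phi> 1"
    and LIN3a: "Polynomial.order 1 (detPhi p k \<Phi>) = p - r"
    and LIN3b: "\<forall>z. poly (detPhi p k \<Phi>) z = 0 \<longrightarrow> z = 1 \<or> 1 < cmod z"
  shows "srad (MG p k r \<Phi> A Bt P0i) < 1"
proof -
  define Ph where "Ph i = cm (\<Phi> i)" for i
  have Ph: "Ph i \<in> carrier_mat p p" if "i \<le> k" for i using dims that unfolding Ph_def by auto
  have P0: "\<Phi> 0 \<in> carrier_mat p p" using dims by simp
  have invc: "Ph 0 * cm P0i = 1\<^sub>m p"
  proof -
    have "cm (\<Phi> 0) * cm P0i = cm (\<Phi> 0 * P0i)" by (rule of_real_hom.mat_hom_mult[OF P0 P0i, symmetric])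
    also have "\<dots> = 1\<^sub>m p" unfolding inv by (rule of_real_hom.mat_hom_one)
    finally show ?thesis unfolding Ph_def .
  qed
  have PhiAt1: "PhiAt p k \<Phi> 1 \<in> carrier_mat p p" by (simp add: PhiAt_def)
  have AB1c: "cm A * cm Bt = - PhiG p k Ph 1"
  proof -
    have "cm A * cm Bt = cm (A * Bt)" by (rule of_real_hom.mat_hom_mult[OF A Bt, symmetric])
    also have "\<dots> = cm (- PhiAt p k \<Phi> 1)" using AB1 by simp
    also have "\<dots> = - cm (PhiAt p k \<Phi> 1)" by (rule eq_matI) (use PhiAt1 in auto)
    finally show ?thesis unfolding Ph_def map_PhiG1[OF dims] .
  qed
  have polyD: "poly (detPhi p k \<Phi>) z = det (PhiG p k Ph z)" for z
    unfolding Ph_def by (rule poly_detPhi[OF dims])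
  have roots: "z = 1 \<or> 1 < cmod z" if "det (PhiG p k Ph z) = 0" for z
    using LIN3b polyD that by auto
  obtain Gd where Gd: "\<And>z. det (PhiG p k Ph z) = (1 - z)^(p - r) * poly Gd z"
    and Gd1: "poly Gd 1 = det (four_block_mat (PsiG p k Ph 1) (cm A) (cm Bt) (0\<^sub>m r r))"
    using det_factor[where k=k and p=p and Ph=Ph and A="cm A" and r=r and Bt="cm Bt", OF Ph _ _ AB1c rp] A Bt by auto
  have Dfac: "detPhi p k \<Phi> = [:1, -1:]^(p - r) * Gd"
  proof -
    have "poly (detPhi p k \<Phi>) = poly ([:1, -1:]^(p - r) * Gd)"
      by (rule ext) (simp add: polyD Gd poly_power)
    thus ?thesis by (simp add: poly_eq_poly_eq_iff)
  qed
  have D0: "detPhi p k \<Phi> \<noteq> 0"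
  proof
    assume "detPhi p k \<Phi> = 0"
    hence "poly (detPhi p k \<Phi>) 0 = 0" by simp
    thus False using LIN3b by fastforce
  qed
  have G1: "det (four_block_mat (PsiG p k Ph 1) (cm A) (cm Bt) (0\<^sub>m r r)) \<noteq> 0"
  proof
    assume "det (four_block_mat (PsiG p k Ph 1) (cm A) (cm Bt) (0\<^sub>m r r)) = 0"
    hence "poly Gd 1 = 0" using Gd1 by simp
    hence d1: "[:-1, 1:] dvd Gd" by (simp add: poly_eq_0_iff_dvd)
    have "[:-1, 1:] dvd ([:1, -1:] :: complex poly)"
      by (rule dvdI[of _ _ "[:-1:]"]) simp
    hence d2: "[:-1, 1:]^(p - r) dvd ([:1, -1:] :: complex poly)^(p - r)" by (rule dvd_power_same)
    have "[:-1, 1:]^(Suc (p - r)) dvd detPhi p k \<Phi>"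
      unfolding Dfac power_Suc2 using mult_dvd_mono[OF d2 d1] by simp
    with order_2[OF D0, of 1] LIN3a show False by simp
  qed
  define N where "N = r + p*(k-1)"
  have MC: "MG p k r \<Phi> A Bt P0i \<in> carrier_mat N N"
  proof -
    have "TBG p k r \<Phi> Bt P0i \<in> carrier_mat (r + p*(k-1)) (p + p*(k-1))"
      unfolding TBG_def using Bt P0i by (intro four_block_carrier_mat) (auto simp: GSG_def DG_def)
    moreover have "ABG p k r A \<in> carrier_mat (p + p*(k-1)) (r + p*(k-1))"
      unfolding ABG_def using A by (intro four_block_carrier_mat) (auto simp: EG_def)
    ultimately show ?thesis unfolding MG_def N_def by auto
  qed
  have ev: "cmod \<mu> < 1" if "eigenvalue (cm (MG p k r \<Phi> A Bt P0i)) \<mu>" for \<mu>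
  proof -
    have "eigenvalue (MG p k r Ph (cm A) (cm Bt) (cm P0i)) \<mu>"
      using that map_MG[OF dims A Bt P0i] unfolding Ph_def by simp
    then show ?thesis
      using eig_bound[where p=p and k=k and Ph=Ph and A="cm A" and r=r and Bt="cm Bt" and P0i="cm P0i" and \<mu>=\<mu>]
        p k Ph A Bt P0i invc AB1c roots G1 by auto
  qed
  show ?thesis
  proof (cases "N = 0")
    case True then show ?thesis using MC unfolding srad_def by simp
  next
    case False
    have C: "cm (MG p k r \<Phi> A Bt P0i) \<in> carrier_mat N N" using MC by auto
    from spectral_radius_mem_max(1)[OF C] False obtain \<mu> where
      "\<mu> \<in> spectrum (cm (MG p k r \<Phi> A Bt P0i))" "spectral_radius (cm (MG p k r \<Phi> A Bt P0i)) = cmod \<mu>" by auto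
    then show ?thesis using ev MC False unfolding srad_def spectrum_def by auto
  qed
qed


lemma inverse_obtain:
  assumes P0: "P0 \<in> carrier_mat p p" and inv: "invertible_mat (P0 :: real mat)"
  obtains P0i where "P0i \<in> carrier_mat p p" "P0 * P0i = 1\<^sub>m p" "P0i * P0 = 1\<^sub>m p"
proof -
  from inv obtain B where B1: "P0 * B = 1\<^sub>m (dim_row P0)" and B2: "B * P0 = 1\<^sub>m (dim_row B)"
    unfolding invertible_mat_def inverts_mat_def by auto
  have c: "dim_col B = p" using arg_cong[OF B1, of dim_col] P0 by simp
  have r: "dim_row B = p" using arg_cong[OF B2, of dim_col] P0 by simp
  show ?thesis using that[of B] B1 B2 c r P0 by auto
qed

lemma mnorm_zero:
  assumes "mnorm M = 0"
  shows "\<forall>i<dim_row M. \<forall>j<dim_col M. M $$ (i,j) = 0"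
proof -
  have "(\<Sum>i<dim_row M. \<Sum>j<dim_col M. (M $$ (i,j))^2) = 0" using assms unfolding mnorm_def by simp
  hence "\<forall>i<dim_row M. (\<Sum>j<dim_col M. (M $$ (i,j))^2) = 0"
    by (subst (asm) sum_nonneg_eq_0_iff) (auto intro: sum_nonneg)
  hence "\<forall>i<dim_row M. \<forall>j<dim_col M. (M $$ (i,j))^2 = 0"
    by (auto simp: sum_nonneg_eq_0_iff)
  thus ?thesis by simp
qed

lemma closed_single:
  assumes B: "B \<in> carrier_mat m n"
  shows "closed_mats m n {B}"
  unfolding closed_mats_def
proof (intro conjI allI impI)
  show "{B} \<subseteq> carrier_mat m n" using B by simp
  fix X L assume L: "L \<in> carrier_mat m n" and X: "\<forall>t. X t \<in> {B}" and lim: "(\<lambda>t. mnorm (X t - L)) \<longlonglongrightarrow> 0"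
  have "(\<lambda>t. mnorm (B - L)) \<longlonglongrightarrow> 0" using lim X by simp
  hence "mnorm (B - L) = 0" by (simp add: LIMSEQ_const_iff)
  hence z: "\<forall>i<m. \<forall>j<n. (B - L) $$ (i,j) = 0" using mnorm_zero[of "B - L"] B L by simp
  have "L = B" by (rule eq_matI) (use z B L in auto)
  thus "L \<in> {B}" by simp
qed

lemma gbold_lin:
  assumes dims: "\<forall>i\<le>k. \<Phi> i \<in> carrier_mat p p" and u: "u \<in> carrier_vec p"
  shows "gbold p k (\<lambda>i z. \<Phi> i *\<^sub>v z) u = GSG p k \<Phi> *\<^sub>v u"
proof (rule eq_vecI)
  fix l assume "l < dim_vec (GSG p k \<Phi> *\<^sub>v u)"
  hence l: "l < p*(k-1)" by (simp add: GSG_def)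
  hence p: "p > 0" by (cases p) auto
  have "gbold p k (\<lambda>i z. \<Phi> i *\<^sub>v z) u $ l = (Gamma p k \<Phi> (l div p + 1) *\<^sub>v u) $ (l mod p)"
    unfolding gbold_def using l gfun_lin[OF dims u] by simp
  also have "Gamma p k \<Phi> (l div p + 1) = GamG p k \<Phi> (l div p + 1)" unfolding Gamma_def GamG_def ..
  finally show "gbold p k (\<lambda>i z. \<Phi> i *\<^sub>v z) u $ l = (GSG p k \<Phi> *\<^sub>v u) $ l"
    using GSG_mult[OF u l] by simp
qed (simp add: gbold_def GSG_def)



lemma Mr_wit_lin:
  fixes \<Phi> :: "nat \<Rightarrow> real mat"
  assumes p: "p \<ge> 1" and k: "k \<ge> 1" and rp: "r \<le> p"
    and dims: "\<forall>i\<le>k. \<Phi> i \<in> carrier_mat p p" and c: "c \<in> carrier_vec p"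
    and LIN1: "invertible_mat (\<Phi> 0)"
    and LIN2a: "\<exists>x\<in>carrier_vec p. c = PhiAt p k \<Phi> 1 *\<^sub>v x"
    and LIN3a: "Polynomial.order 1 (detPhi p k \<Phi>) = p - r"
    and LIN3b: "\<forall>z. poly (detPhi p k \<Phi>) z = 0 \<longrightarrow> z = 1 \<or> 1 < cmod z"
    and \<alpha>: "\<alpha> \<in> carrier_mat p r" and \<beta>: "\<beta> \<in> carrier_mat p r" and rk: "vec_space.rank p \<alpha> = r"
    and AB: "\<alpha> * transpose_mat \<beta> = - PhiAt p k \<Phi> 1"
  shows "Mr_wit p k r c (\<lambda>i z. \<Phi> i *\<^sub>v z) \<alpha> (\<lambda>z. transpose_mat \<beta> *\<^sub>v z)"
proof -
  define f where "f = (\<lambda>i z. \<Phi> i *\<^sub>v z)"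
  have zmv: "\<And>n m (v::real vec). v \<in> carrier_vec m \<Longrightarrow> 0\<^sub>m n m *\<^sub>v v = 0\<^sub>v n"
    by (rule eq_vecI) (auto simp: scalar_prod_def)
  define Bt where "Bt = transpose_mat \<beta>"
  have Bt: "Bt \<in> carrier_mat r p" unfolding Bt_def using \<beta> by simp
  have P0: "\<Phi> 0 \<in> carrier_mat p p" using dims by simp
  obtain P0i where P0i: "P0i \<in> carrier_mat p p" "\<Phi> 0 * P0i = 1\<^sub>m p" "P0i * \<Phi> 0 = 1\<^sub>m p"
    using inverse_obtain[OF P0 LIN1] by blast
  note hm = homeo_mat[OF P0 P0i(1) P0i(3) P0i(2)]
  have PA: "PhiAt p k \<Phi> 1 \<in> carrier_mat p p" by (simp add: PhiAt_def)
  have AB': "\<alpha> * Bt = - PhiAt p k \<Phi> 1" using AB unfolding Bt_def .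
  from LIN2a obtain x0 where x0: "x0 \<in> carrier_vec p" "c = PhiAt p k \<Phi> 1 *\<^sub>v x0" by blast
  have cmu: "\<exists>\<mu>\<in>carrier_vec r. c = \<alpha> *\<^sub>v \<mu>"
  proof (intro bexI)
    have "\<alpha> *\<^sub>v (- (Bt *\<^sub>v x0)) = - (\<alpha> *\<^sub>v (Bt *\<^sub>v x0))" using mv_uminus[OF \<alpha>] Bt x0 by simp
    also have "\<alpha> *\<^sub>v (Bt *\<^sub>v x0) = (\<alpha> * Bt) *\<^sub>v x0" using \<alpha> Bt x0 by (simp add: assoc_mult_mat_vec)
    also have "\<dots> = - (PhiAt p k \<Phi> 1 *\<^sub>v x0)" unfolding AB' using PA x0 by simp
    finally show "c = \<alpha> *\<^sub>v (- (Bt *\<^sub>v x0))" using x0 PA by simp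
    show "- (Bt *\<^sub>v x0) \<in> carrier_vec r" using Bt x0 by simp
  qed
  have th: "\<forall>z\<in>carrier_vec p. Bt *\<^sub>v z \<in> carrier_vec r \<and> pifun p k f z = \<alpha> *\<^sub>v (Bt *\<^sub>v z)"
  proof
    fix z :: "real vec" assume z: "z \<in> carrier_vec p"
    have "pifun p k f z = - (PhiAt p k \<Phi> 1 *\<^sub>v z)" unfolding f_def by (rule pifun_lin[OF dims z])
    also have "\<dots> = (\<alpha> * Bt) *\<^sub>v z" unfolding AB' using PA z by simp
    also have "\<dots> = \<alpha> *\<^sub>v (Bt *\<^sub>v z)" using \<alpha> Bt z by (simp add: assoc_mult_mat_vec)
    finally show "Bt *\<^sub>v z \<in> carrier_vec r \<and> pifun p k f z = \<alpha> *\<^sub>v (Bt *\<^sub>v z)" using Bt z by simp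
  qed
  define n1 where "n1 = p*(k-1)"
  define T where "T = TBG p k r \<Phi> Bt P0i"
  define bb where "bb = transpose_mat T"
  have GS: "GSG p k \<Phi> \<in> carrier_mat n1 p" and D: "(DG p k :: real mat) \<in> carrier_mat n1 n1"
    unfolding n1_def by (auto simp: GSG_def DG_def)
  have T: "T \<in> carrier_mat (r + n1) (p + n1)"
    unfolding T_def TBG_def n1_def[symmetric] using Bt P0i GS D by (intro four_block_carrier_mat) auto
  have kp: "k * p = p + n1" unfolding n1_def using k by (cases k) auto
  have bbC: "bb \<in> carrier_mat (k*p) (p*(k-1)+r)" unfolding bb_def kp using T by (auto simp: n1_def)
  have Mdef: "1\<^sub>m (p*(k-1)+r) + transpose_mat bb * alpha_bold p k r \<alpha> = MG p k r \<Phi> \<alpha> Bt P0i"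
    unfolding bb_def T_def MG_def alpha_bold_def ABG_def Emat_def EG_def by (simp add: add.commute)
  have Mlt: "srad (MG p k r \<Phi> \<alpha> Bt P0i) < 1"
    by (rule srad_MG_lt1[OF p k rp dims \<alpha> Bt P0i(1) P0i(2) AB' LIN3a LIN3b])
  have MC: "MG p k r \<Phi> \<alpha> Bt P0i \<in> carrier_mat (p*(k-1)+r) (p*(k-1)+r)"
  proof -
    have "ABG p k r \<alpha> \<in> carrier_mat (p + n1) (r + n1)"
      unfolding ABG_def n1_def[symmetric] using \<alpha> by (intro four_block_carrier_mat) (auto simp: EG_def n1_def)
    then show ?thesis using T unfolding MG_def T_def[symmetric] n1_def[symmetric] by (auto simp: add.commute)
  qed
  have jsr: "jsr (p*(k-1)+r) ((\<lambda>\<beta>. 1\<^sub>m (p*(k-1)+r) + transpose_mat \<beta> * alpha_bold p k r \<alpha>) ` {bb})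
      \<le> ereal (srad (MG p k r \<Phi> \<alpha> Bt P0i))"
    unfolding image_insert image_empty Mdef by (rule jsr_single[OF MC order_refl])
  have lin: "theta_bold p k f (\<lambda>z. Bt *\<^sub>v z) (the_inv_into (carrier_vec p) (f 0) (vec_first zb p))
      + D0mat p k r *\<^sub>v zb = T *\<^sub>v zb" if zb: "zb \<in> carrier_vec (k*p)" for zb
  proof -
    define z1 where "z1 = vec_first zb p"
    define z2 where "z2 = vec_last zb n1"
    have z1: "z1 \<in> carrier_vec p" and z2: "z2 \<in> carrier_vec n1" unfolding z1_def z2_def by auto
    have zb': "zb = z1 @\<^sub>v z2" unfolding z1_def z2_def using zb kp vec_first_last_append[of zb p n1] by simp
    define u where "u = P0i *\<^sub>v z1"
    have u: "u \<in> carrier_vec p" unfolding u_def using P0i z1 by simp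
    have inv: "the_inv_into (carrier_vec p) (f 0) z1 = u" unfolding f_def u_def using hm(2)[OF z1] by simp
    have thb: "theta_bold p k f (\<lambda>z. Bt *\<^sub>v z) u = (Bt *\<^sub>v u) @\<^sub>v (GSG p k \<Phi> *\<^sub>v u)"
      unfolding theta_bold_def f_def using gbold_lin[OF dims u] by simp
    have D0: "D0mat p k r *\<^sub>v zb = 0\<^sub>v r @\<^sub>v (DG p k *\<^sub>v z2)"
    proof -
      have "D0mat p k r *\<^sub>v (z1 @\<^sub>v z2) = (0\<^sub>m r p *\<^sub>v z1 + 0\<^sub>m r n1 *\<^sub>v z2) @\<^sub>v (0\<^sub>m n1 p *\<^sub>v z1 + Dmat p k *\<^sub>v z2)"
        unfolding D0mat_def n1_def[symmetric]
        by (rule four_block_mat_mult_vec[OF _ _ _ _ z1 z2]) (auto simp: Dmat_def n1_def)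
      also have "Dmat p k = DG p k" unfolding Dmat_def DG_def ..
      moreover have "DG p k *\<^sub>v z2 \<in> carrier_vec n1" using D z2 by simp
      ultimately show ?thesis unfolding zb'[symmetric] using z1 z2 zmv by simp
    qed
    have Tz: "T *\<^sub>v zb = (Bt *\<^sub>v u) @\<^sub>v (GSG p k \<Phi> *\<^sub>v u + DG p k *\<^sub>v z2)"
    proof -
      have "T *\<^sub>v (z1 @\<^sub>v z2) = ((Bt * P0i) *\<^sub>v z1 + 0\<^sub>m r n1 *\<^sub>v z2) @\<^sub>v ((GSG p k \<Phi> * P0i) *\<^sub>v z1 + DG p k *\<^sub>v z2)"
        unfolding T_def TBG_def n1_def[symmetric]
        by (rule four_block_mat_mult_vec[OF _ _ _ D z1 z2]) (use Bt P0i GS in auto)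
      then show ?thesis unfolding zb'[symmetric] u_def using Bt P0i GS z1 z2 zmv[OF z2, of r] by (simp add: assoc_mult_mat_vec)
    qed
    have "theta_bold p k f (\<lambda>z. Bt *\<^sub>v z) u + D0mat p k r *\<^sub>v zb
        = ((Bt *\<^sub>v u) + 0\<^sub>v r) @\<^sub>v (GSG p k \<Phi> *\<^sub>v u + DG p k *\<^sub>v z2)"
      unfolding thb D0 by (rule append_vec_add[where n=r and m=n1]) (use Bt GS D u z2 in auto)
    also have "\<dots> = T *\<^sub>v zb" unfolding Tz using Bt u by simp
    finally show ?thesis unfolding z1_def[symmetric] inv .
  qed
  have diff: "\<exists>\<beta>'\<in>{bb}.
      (theta_bold p k f (\<lambda>z. Bt *\<^sub>v z) (the_inv_into (carrier_vec p) (f 0) (vec_first zb p)) + D0mat p k r *\<^sub>v zb)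
      - (theta_bold p k f (\<lambda>z. Bt *\<^sub>v z) (the_inv_into (carrier_vec p) (f 0) (vec_first zb' p)) + D0mat p k r *\<^sub>v zb')
      = transpose_mat \<beta>' *\<^sub>v (zb - zb')"
    if zb: "zb \<in> carrier_vec (k*p)" and zb': "zb' \<in> carrier_vec (k*p)" for zb zb'
  proof -
    have "T *\<^sub>v zb - T *\<^sub>v zb' = T *\<^sub>v (zb - zb')"
      using T zb zb' kp by (simp add: mult_minus_distrib_mat_vec)
    then show ?thesis unfolding lin[OF zb] lin[OF zb'] bb_def by simp
  qed
  have EB: "\<exists>B. closed_mats (k * p) (p * (k - 1) + r) B \<and> (\<forall>\<beta>\<in>B. mnorm \<beta> \<le> mnorm bb) \<and>
        jsr (p * (k - 1) + r) ((\<lambda>\<beta>. 1\<^sub>m (p * (k - 1) + r) + \<beta>\<^sup>T * alpha_bold p k r \<alpha>) ` B) \<le> ereal (srad (MG p k r \<Phi> \<alpha> Bt P0i)) \<and>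
        (\<forall>zb\<in>carrier_vec (k * p). \<forall>zb'\<in>carrier_vec (k * p). \<exists>\<beta>\<in>B.
            theta_bold p k f (\<lambda>z. Bt *\<^sub>v z) (the_inv_into (carrier_vec p) (f 0) (vec_first zb p)) + D0mat p k r *\<^sub>v zb -
            (theta_bold p k f (\<lambda>z. Bt *\<^sub>v z) (the_inv_into (carrier_vec p) (f 0) (vec_first zb' p)) + D0mat p k r *\<^sub>v zb') =
            \<beta>\<^sup>T *\<^sub>v (zb - zb'))"
      using closed_single[OF bbC] jsr diff by (intro exI[of _ "{bb}"]) auto
  have H: "homeo_vec p (f 0)" unfolding f_def using hm(1) by simp
  show ?thesis
    unfolding Mr_wit_def using \<alpha> rk Mlt H cmu th EB unfolding f_def Bt_def by blast
qed



theorem proposition2p1: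
  fixes p k r :: nat and c :: "real vec" and \<Phi> :: "nat \<Rightarrow> real mat"
  assumes p: "p \<ge> 1" and k: "k \<ge> 1" and r: "r \<le> p"
    and dims: "\<forall>i\<le>k. \<Phi> i \<in> carrier_mat p p" and c: "c \<in> carrier_vec p"
    and LIN1: "invertible_mat (\<Phi> 0)"
    and LIN2a: "\<exists>x\<in>carrier_vec p. c = PhiAt p k \<Phi> 1 *\<^sub>v x"
    and LIN2b: "vec_space.rank p (PhiAt p k \<Phi> 1) = r"
    and LIN3a: "Polynomial.order 1 (detPhi p k \<Phi>) = p - r"
    and LIN3b: "\<forall>z. poly (detPhi p k \<Phi>) z = 0 \<longrightarrow> z = 1 \<or> 1 < cmod z"
  shows "let f = (\<lambda>i z. \<Phi> i *\<^sub>v z) in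
    in_Mr p k r c f \<and>
    (\<forall>j\<in>{1..k-1}. \<forall>z\<in>carrier_vec p. gfun p k f j z = Gamma p k \<Phi> j *\<^sub>v z) \<and>
    (\<exists>\<alpha> \<beta>. \<alpha> \<in> carrier_mat p r \<and> \<beta> \<in> carrier_mat p r \<and>
        vec_space.rank p \<alpha> = r \<and> vec_space.rank p \<beta> = r \<and>
        \<alpha> * transpose_mat \<beta> = - PhiAt p k \<Phi> 1) \<and>
    (\<forall>\<alpha> \<beta>. \<alpha> \<in> carrier_mat p r \<longrightarrow> \<beta> \<in> carrier_mat p r \<longrightarrow>
        vec_space.rank p \<alpha> = r \<longrightarrow> vec_space.rank p \<beta> = r \<longrightarrow>
        \<alpha> * transpose_mat \<beta> = - PhiAt p k \<Phi> 1 \<longrightarrow>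
        Mr_wit p k r c f \<alpha> (\<lambda>z. transpose_mat \<beta> *\<^sub>v z) \<and>
        (\<forall>\<alpha>perp. \<alpha>perp \<in> carrier_mat p (p - r) \<longrightarrow> vec_space.rank p \<alpha>perp = p - r \<longrightarrow>
           transpose_mat \<alpha>perp * \<alpha> = 0\<^sub>m (p - r) r \<longrightarrow>
           (\<forall>z\<in>carrier_vec p. psi p k f \<alpha>perp z =
              (transpose_mat \<alpha>perp *
                 mat p p (\<lambda>(a,b). \<Phi> 0 $$ (a,b) - (\<Sum>i\<in>{1..k-1}. Gamma p k \<Phi> i $$ (a,b)))) *\<^sub>v z)))"
proof -
  have PA: "PhiAt p k \<Phi> 1 \<in> carrier_mat p p" by (simp add: PhiAt_def)
  have ex: "\<exists>\<alpha> \<beta>. \<alpha> \<in> carrier_mat p r \<and> \<beta> \<in> carrier_mat p r \<and>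
        vec_space.rank p \<alpha> = r \<and> vec_space.rank p \<beta> = r \<and>
        \<alpha> * transpose_mat \<beta> = - PhiAt p k \<Phi> 1"
  proof -
    obtain \<alpha>' \<beta> where ab: "\<alpha>' \<in> carrier_mat p r" "\<beta> \<in> carrier_mat p r" "vec_space.rank p \<alpha>' = r"
      "vec_space.rank p \<beta> = r" "\<alpha>' * transpose_mat \<beta> = PhiAt p k \<Phi> 1"
      using vec_space.rank_factorization[OF PA LIN2b] by blast
    have na: "- \<alpha>' \<in> carrier_mat p r" using ab by simp
    have inj: "\<forall>v\<in>carrier_vec r. \<alpha>' *\<^sub>v v = 0\<^sub>v p \<longrightarrow> v = 0\<^sub>v r"
      using vec_space.rank_full_iff_inj[OF ab(1)] ab(3) by simp
    have "\<forall>v\<in>carrier_vec r. (- \<alpha>') *\<^sub>v v = 0\<^sub>v p \<longrightarrow> v = 0\<^sub>v r"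
    proof (intro ballI impI)
      fix v :: "real vec" assume v: "v \<in> carrier_vec r" and h: "(- \<alpha>') *\<^sub>v v = 0\<^sub>v p"
      have "- (\<alpha>' *\<^sub>v v) = 0\<^sub>v p" using h v ab(1) by simp
      hence "\<alpha>' *\<^sub>v v = 0\<^sub>v p" using ab(1) v by (metis uminus_uminus_vec uminus_zero_vec)
      thus "v = 0\<^sub>v r" using inj v by blast
    qed
    hence rk: "vec_space.rank p (- \<alpha>') = r" using vec_space.rank_full_iff_inj[OF na] by simp
    have "(- \<alpha>') * transpose_mat \<beta> = - (\<alpha>' * transpose_mat \<beta>)"
      by (rule uminus_mult_left_mat) (use ab(1,2) in simp)
    hence "(- \<alpha>') * transpose_mat \<beta> = - PhiAt p k \<Phi> 1" using ab(5) by simp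
    then show ?thesis using na ab(2,4) rk by blast
  qed
  have wit: "Mr_wit p k r c (\<lambda>i z. \<Phi> i *\<^sub>v z) \<alpha> (\<lambda>z. transpose_mat \<beta> *\<^sub>v z)"
    if "\<alpha> \<in> carrier_mat p r" "\<beta> \<in> carrier_mat p r" "vec_space.rank p \<alpha> = r"
       "\<alpha> * transpose_mat \<beta> = - PhiAt p k \<Phi> 1" for \<alpha> \<beta>
    by (rule Mr_wit_lin[OF p k r dims c LIN1 LIN2a LIN3a LIN3b that])
  show ?thesis unfolding Let_def
  proof (intro conjI)
    show "in_Mr p k r c (\<lambda>i z. \<Phi> i *\<^sub>v z)" unfolding in_Mr_def using ex wit by blast
    show "\<forall>j\<in>{1..k-1}. \<forall>z\<in>carrier_vec p. gfun p k (\<lambda>i z. \<Phi> i *\<^sub>v z) j z = Gamma p k \<Phi> j *\<^sub>v z"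
      using gfun_lin[OF dims] by blast
    show "\<exists>\<alpha> \<beta>. \<alpha> \<in> carrier_mat p r \<and> \<beta> \<in> carrier_mat p r \<and>
        vec_space.rank p \<alpha> = r \<and> vec_space.rank p \<beta> = r \<and>
        \<alpha> * transpose_mat \<beta> = - PhiAt p k \<Phi> 1" by (rule ex)
    show "\<forall>\<alpha> \<beta>. \<alpha> \<in> carrier_mat p r \<longrightarrow> \<beta> \<in> carrier_mat p r \<longrightarrow>
        vec_space.rank p \<alpha> = r \<longrightarrow> vec_space.rank p \<beta> = r \<longrightarrow>
        \<alpha> * transpose_mat \<beta> = - PhiAt p k \<Phi> 1 \<longrightarrow>
        Mr_wit p k r c (\<lambda>i z. \<Phi> i *\<^sub>v z) \<alpha> (\<lambda>z. transpose_mat \<beta> *\<^sub>v z) \<and>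
        (\<forall>\<alpha>perp. \<alpha>perp \<in> carrier_mat p (p - r) \<longrightarrow> vec_space.rank p \<alpha>perp = p - r \<longrightarrow>
           transpose_mat \<alpha>perp * \<alpha> = 0\<^sub>m (p - r) r \<longrightarrow>
           (\<forall>z\<in>carrier_vec p. psi p k (\<lambda>i z. \<Phi> i *\<^sub>v z) \<alpha>perp z =
              (transpose_mat \<alpha>perp *
                 mat p p (\<lambda>(a,b). \<Phi> 0 $$ (a,b) - (\<Sum>i\<in>{1..k-1}. Gamma p k \<Phi> i $$ (a,b)))) *\<^sub>v z))"
      using wit psi_lin[OF dims] by blast
  qed
qed


end
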